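(* Let $c>0$, let $\nu,\tilde\nu$ be probability measures on $\mathbb R_+$ different from $\boldsymbol d_0$, and let $\mu,\mathcal D,\widetilde{\mathcal D}$ be as below. Let $\boldsymbol{\tilde\delta}\in\widetilde{\mathcal D}$ and assume there exists $\boldsymbol x\in\mathbb R\setminus\{0\}$ such that $$\boldsymbol\delta:=c\int\frac{t}{-\boldsymbol x(1+\boldsymbol{\tilde\delta}t)}\nu(dt)\in\mathcal D,\qquad \boldsymbol{\tilde\delta}=\int\frac{t}{-\boldsymbol x(1+\boldsymbol\delta t)}\tilde\nu(dt),$$ and $$1-\boldsymbol x^2\boldsymbol\gamma(\boldsymbol x,\boldsymbol{\tilde\delta})\boldsymbol{\tilde\gamma}(\boldsymbol x,\boldsymbol\delta)>0,$$ where $\boldsymbol\gamma(\boldsymbol x,\boldsymbol{\tilde\delta})=c\int\frac{t^2}{\boldsymbol x^2(1+\boldsymbol{\tilde\delta}t)^2}\nu(dt)$ and $\boldsymbol{\tilde\gamma}(\boldsymbol x,\boldsymbol\delta)=\int\frac{t^2}{\boldsymbol x^2(1+\boldsymbol\delta t)^2}\tilde\nu(dt)$. Then $\boldsymbol x\notin\operatorname{supp}(\mu)$.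
   Context: $\mathbb C_+=\{z:\Im z>0\}$, $\boldsymbol d_0$ is the Dirac mass at $0$. For $z\in\mathbb C_+$, $(\delta(z),\tilde\delta(z))$ is the unique solution in $\mathbb C_+^2$ of $\delta = c\int \frac{t}{-z(1+\tilde\delta t)}\nu(dt)$, $\tilde\delta=\int\frac{t}{-z(1+\delta t)}\tilde\nu(dt)$; $m(z)=\int\frac{1}{-z(1+\tilde\delta(z)t)}\nu(dt)$ is the Stieltjes transform $\int\frac{\mu(dt)}{t-z}$ of a probability measure $\mu$ on $\mathbb R_+$. Define $\mathcal D=\{0\}\cup\{\boldsymbol\delta\in\mathbb R\setminus\{0\}:-\boldsymbol\delta^{-1}\notin\operatorname{supp}(\tilde\nu)\}$ if $\operatorname{supp}(\tilde\nu)$ is compact and $\mathcal D=\{\boldsymbol\delta\in\mathbb R\setminus\{0\}:-\boldsymbol\delta^{-1}\notin\operatorname{supp}(\tilde\nu)\}$ otherwise; $\widetilde{\mathcal D}$ is defined in the same way with $\nu$ in place of $\tilde\nu$. *)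

theory Defs
  imports "HOL-Probability.Probability"
begin

definition msupp :: "real measure \<Rightarrow> real set" where
  "msupp M = {x. \<forall>e>0. emeasure M (ball x e) \<noteq> 0}"

definition prob_on_Rplus :: "real measure \<Rightarrow> bool" where
  "prob_on_Rplus M \<longleftrightarrow> prob_space M \<and> sets M = sets borel \<and> emeasure M {..<0} = 0"

text \<open>The set D built from a measure (D uses nu-tilde, D-tilde uses nu).\<close>
definition Dset :: "real measure \<Rightarrow> real set" where
  "Dset M = (if compact (msupp M) then {0} else {})
            \<union> {d. d \<noteq> 0 \<and> - inverse d \<notin> msupp M}"

text \<open>The unique solution (delta(z), delta-tilde(z)) in C_+^2 of the fixed point system.\<close>
definition delta_pair :: "real \<Rightarrow> real measure \<Rightarrow> real measure \<Rightarrow> complex \<Rightarrow> complex \<times> complex" where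
  "delta_pair c nu nut z = (THE p. Im (fst p) > 0 \<and> Im (snd p) > 0 \<and>
      fst p = complex_of_real c *
        (\<integral>t. complex_of_real t / (- z * (1 + snd p * complex_of_real t)) \<partial>nu) \<and>
      snd p = (\<integral>t. complex_of_real t / (- z * (1 + fst p * complex_of_real t)) \<partial>nut))"

definition m_fun :: "real \<Rightarrow> real measure \<Rightarrow> real measure \<Rightarrow> complex \<Rightarrow> complex" where
  "m_fun c nu nut z =
     (\<integral>t. 1 / (- z * (1 + snd (delta_pair c nu nut z) * complex_of_real t)) \<partial>nu)"

end

theory Submission
  imports Defs
begin


definition pr :: "real measure \<Rightarrow> bool" where
  "pr N \<longleftrightarrow> prob_space N \<and> sets N = sets borel"

definition bnd :: "real measure \<Rightarrow> complex \<Rightarrow> real \<Rightarrow> bool" where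
  "bnd N w M \<longleftrightarrow> M > 0 \<and> (AE t in N. 0 \<le> t \<and> t \<le> M * cmod (1 + w * of_real t)
       \<and> 1 \<le> M * cmod (1 + w * of_real t))"

lemma pr_meas: "pr N \<Longrightarrow> f \<in> borel_measurable borel \<Longrightarrow> f \<in> borel_measurable N"
  unfolding pr_def using measurable_cong_sets by blast

lemma pr_int:
  fixes f :: "real \<Rightarrow> 'b::{banach,second_countable_topology}"
  assumes "pr N" "f \<in> borel_measurable borel" "AE t in N. norm (f t) \<le> C"
  shows "integrable N f"
proof -
  interpret prob_space N using assms unfolding pr_def by simp
  show ?thesis by (rule integrable_const_bound[OF assms(3)]) (rule pr_meas[OF assms(1,2)])
qed

lemma bnd_pert:
  assumes "bnd N w M" "cmod (w' - w) \<le> 1 / (2*M)"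
  shows "bnd N w' (2*M)"
proof -
  have M: "M > 0" using assms unfolding bnd_def by auto
  have "AE t in N. 0 \<le> t \<and> t \<le> M * cmod (1 + w * of_real t) \<and> 1 \<le> M * cmod (1 + w * of_real t)"
    using assms unfolding bnd_def by auto
  then have "AE t in N. 0 \<le> t \<and> t \<le> 2*M * cmod (1 + w' * of_real t) \<and> 1 \<le> 2*M * cmod (1 + w' * of_real t)"
  proof (rule AE_mp, intro AE_I2 impI)
    fix t :: real assume h: "0 \<le> t \<and> t \<le> M * cmod (1 + w * of_real t) \<and> 1 \<le> M * cmod (1 + w * of_real t)"
    have e: "(1 + w * of_real t) + (w' - w) * of_real t = 1 + w' * of_real t" by (simp add: algebra_simps)
    have "cmod (1 + w * of_real t) - cmod ((w' - w) * of_real t) \<le> cmod (1 + w' * of_real t)"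
      using norm_diff_ineq[of "1 + w * of_real t" "(w' - w) * of_real t"] e by metis
    then have "cmod (1 + w' * of_real t) \<ge> cmod (1 + w * of_real t) - cmod (w' - w) * t"
      using h by (simp add: norm_mult)
    moreover have "cmod (w' - w) * t \<le> t / (2*M)"
    proof -
      have "cmod (w' - w) * (2*M) \<le> 1" using assms(2) M by (simp add: divide_simps)
      then have "t * (cmod (w' - w) * (2*M)) \<le> t" using h by (simp add: mult_left_le)
      then show ?thesis using M by (simp add: divide_simps algebra_simps)
    qed
    moreover have "t / (2*M) \<le> cmod (1 + w * of_real t) / 2" using h M by (simp add: divide_simps mult.commute)
    ultimately have "cmod (1 + w' * of_real t) \<ge> cmod (1 + w * of_real t) / 2" by linarith
    then show "0 \<le> t \<and> t \<le> 2*M * cmod (1 + w' * of_real t) \<and> 1 \<le> 2*M * cmod (1 + w' * of_real t)"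
    proof -
      have "M * cmod (1 + w * of_real t) \<le> M * (2 * cmod (1 + w' * of_real t))"
        using \<open>cmod (1 + w' * of_real t) \<ge> cmod (1 + w * of_real t) / 2\<close> M by (intro mult_left_mono) auto
      then show ?thesis using h by (simp add: algebra_simps)
    qed
  qed
  then show ?thesis unfolding bnd_def using M by simp
qed

lemma bnd_upper:
  assumes "pr N" "AE t in N. 0 \<le> t" "Im w > 0"
  shows "bnd N w (1 + cmod w / Im w + 1 / Im w)"
proof -
  have "AE t in N. 0 \<le> t \<and> t \<le> (1 + cmod w / Im w + 1 / Im w) * cmod (1 + w * of_real t)
       \<and> 1 \<le> (1 + cmod w / Im w + 1 / Im w) * cmod (1 + w * of_real t)"
  proof (rule AE_mp[OF assms(2)], intro AE_I2 impI)
    fix t :: real assume t: "0 \<le> t"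
    let ?A = "cmod (1 + w * of_real t)"
    have "t * Im w = Im (1 + w * of_real t)" by simp
    also have "\<dots> \<le> ?A" using abs_Im_le_cmod[of "1 + w * of_real t"] by linarith
    finally have i1: "t * Im w \<le> ?A" .
    have i2: "1 \<le> ?A + cmod w * t"
      using norm_triangle_ineq2[of 1 "- (w * of_real t)"] t by (simp add: norm_mult)
    have "t \<le> ?A / Im w" using i1 assms(3) by (simp add: divide_simps mult.commute)
    also have "\<dots> \<le> (1 + cmod w / Im w + 1 / Im w) * ?A" using assms(3)
      by (simp add: divide_simps algebra_simps)
    finally have a: "t \<le> (1 + cmod w / Im w + 1 / Im w) * ?A" .
    have "cmod w * t \<le> cmod w * (?A / Im w)" using i1 assms(3)
      by (intro mult_left_mono) (simp_all add: divide_simps mult.commute)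
    then have "1 \<le> ?A + cmod w * ?A / Im w" using i2 by simp
    also have "\<dots> \<le> (1 + cmod w / Im w + 1 / Im w) * ?A" using assms(3)
      by (simp add: divide_simps algebra_simps)
    finally show "0 \<le> t \<and> t \<le> (1 + cmod w / Im w + 1 / Im w) * ?A \<and> 1 \<le> (1 + cmod w / Im w + 1 / Im w) * ?A"
      using a t by simp
  qed
  moreover have "1 + cmod w / Im w + 1 / Im w > 0" using assms(3) by (simp add: add_pos_nonneg)
  ultimately show ?thesis unfolding bnd_def by simp
qed



lemma aux_frac: "(P::real) \<noteq> 0 \<Longrightarrow> Q \<noteq> 0 \<Longrightarrow> (t*a + t*t*b)/(P*Q) = (a*(t/Q) + b*(t^2/Q))/P"
  by (simp add: field_simps power2_eq_square)

lemma ptw_Im1: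
  fixes z w :: complex and t :: real
  assumes "z \<noteq> 0" "1 + w * of_real t \<noteq> 0"
  shows "Im (of_real t / (- z * (1 + w * of_real t))) =
    (Im z * (t / (cmod (1 + w * of_real t))\<^sup>2) + Im (z * w) * (t\<^sup>2 / (cmod (1 + w * of_real t))\<^sup>2)) / (cmod z)\<^sup>2"
proof -
  have nz: "(cmod z)^2 = (Re z)^2 + (Im z)^2" by (simp add: cmod_power2)
  have na: "(cmod (1 + w * of_real t))^2 = (1 + Re w * t)^2 + (Im w * t)^2" by (simp add: cmod_power2)
  have "(cmod z)^2 \<noteq> 0" "(cmod (1 + w * of_real t))^2 \<noteq> 0" using assms by auto
  then have p1: "(Re z)^2 + (Im z)^2 \<noteq> 0" and p2: "(1 + Re w * t)^2 + (Im w * t)^2 \<noteq> 0"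
    using nz na by auto
  have "Im (of_real t / (- z * (1 + w * of_real t))) = 
     (t * Im z + t*t*(Im w * Re z + Re w * Im z)) / (((Re z)^2 + (Im z)^2) * ((1 + Re w * t)^2 + (Im w * t)^2))"
    using p1 p2 by (simp add: Im_divide field_simps power2_eq_square)
  also have "\<dots> = (Im z * (t / ((1 + Re w * t)^2 + (Im w * t)^2)) + Im (z * w) * (t\<^sup>2 / ((1 + Re w * t)^2 + (Im w * t)^2))) / ((Re z)^2 + (Im z)^2)"
    using aux_frac[OF p1 p2, of t "Im z" "Im w * Re z + Re w * Im z"] by simp
  finally show ?thesis unfolding nz na .
qed

lemma aux_frac0: "(P::real) \<noteq> 0 \<Longrightarrow> Q \<noteq> 0 \<Longrightarrow> (1*a + 1*t*b)/(P*Q) = (a*(1/Q) + b*(t/Q))/P"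
  by (simp add: field_simps)

lemma aux_zdiv: "(z::complex) \<noteq> 0 \<Longrightarrow> A \<noteq> 0 \<Longrightarrow> z * (a / (- z * A)) = - (a / A)"
  by (simp add: field_simps)

lemma ptw_Im0:
  fixes z w :: complex and t :: real
  assumes "z \<noteq> 0" "1 + w * of_real t \<noteq> 0"
  shows "Im (1 / (- z * (1 + w * of_real t))) =
    (Im z * (1 / (cmod (1 + w * of_real t))\<^sup>2) + Im (z * w) * (t / (cmod (1 + w * of_real t))\<^sup>2)) / (cmod z)\<^sup>2"
proof -
  have nz: "(cmod z)^2 = (Re z)^2 + (Im z)^2" by (simp add: cmod_power2)
  have na: "(cmod (1 + w * of_real t))^2 = (1 + Re w * t)^2 + (Im w * t)^2" by (simp add: cmod_power2)
  have "(cmod z)^2 \<noteq> 0" "(cmod (1 + w * of_real t))^2 \<noteq> 0" using assms by auto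
  then have p1: "(Re z)^2 + (Im z)^2 \<noteq> 0" and p2: "(1 + Re w * t)^2 + (Im w * t)^2 \<noteq> 0"
    using nz na by auto
  have "Im (1 / (- z * (1 + w * of_real t))) = 
     (1 * Im z + 1*t*(Im w * Re z + Re w * Im z)) / (((Re z)^2 + (Im z)^2) * ((1 + Re w * t)^2 + (Im w * t)^2))"
    using p1 p2 by (simp add: Im_divide field_simps power2_eq_square)
  also have "\<dots> = (Im z * (1 / ((1 + Re w * t)^2 + (Im w * t)^2)) + Im (z * w) * (t / ((1 + Re w * t)^2 + (Im w * t)^2))) / ((Re z)^2 + (Im z)^2)"
    using aux_frac0[OF p1 p2, of "Im z" t "Im w * Re z + Re w * Im z"] by simp
  finally show ?thesis unfolding nz na .
qed

lemma ptw_Imz: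
  fixes z w :: complex and t :: real
  assumes "z \<noteq> 0" "1 + w * of_real t \<noteq> 0"
  shows "Im (z * (of_real t / (- z * (1 + w * of_real t)))) = Im w * (t\<^sup>2 / (cmod (1 + w * of_real t))\<^sup>2)"
proof -
  have na: "(cmod (1 + w * of_real t))^2 = (1 + Re w * t)^2 + (Im w * t)^2" by (simp add: cmod_power2)
  have "(cmod (1 + w * of_real t))^2 \<noteq> 0" using assms by auto
  then have p2: "(1 + Re w * t)^2 + (Im w * t)^2 \<noteq> 0" using na by auto
  have e: "z * (of_real t / (- z * (1 + w * of_real t))) = - (of_real t / (1 + w * of_real t))"
    using aux_zdiv assms by blast
  show ?thesis unfolding e na using p2 by (simp add: Im_divide field_simps power2_eq_square)
qed

definition Fk :: "real measure \<Rightarrow> complex \<Rightarrow> complex \<Rightarrow> complex" where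
  "Fk N w z = (\<integral>t. complex_of_real t / (- z * (1 + w * complex_of_real t)) \<partial>N)"
definition Mk :: "real measure \<Rightarrow> complex \<Rightarrow> complex \<Rightarrow> complex" where
  "Mk N w z = (\<integral>t. 1 / (- z * (1 + w * complex_of_real t)) \<partial>N)"
definition I2 :: "real measure \<Rightarrow> complex \<Rightarrow> real" where
  "I2 N w = (\<integral>t. t\<^sup>2 / (cmod (1 + w * complex_of_real t))\<^sup>2 \<partial>N)"
definition I1 :: "real measure \<Rightarrow> complex \<Rightarrow> real" where
  "I1 N w = (\<integral>t. t / (cmod (1 + w * complex_of_real t))\<^sup>2 \<partial>N)"
definition I0 :: "real measure \<Rightarrow> complex \<Rightarrow> real" where
  "I0 N w = (\<integral>t. 1 / (cmod (1 + w * complex_of_real t))\<^sup>2 \<partial>N)"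

lemma ptw_bnd:
  fixes t M a :: real
  assumes "0 \<le> t" "t \<le> M*a" "1 \<le> M*a" "0 < M"
  shows "0 < a \<and> t / a \<le> M \<and> 1 / a \<le> M"
proof -
  have a: "0 < a" using assms by (smt (verit) mult_nonpos_nonneg mult_nonneg_nonpos mult_pos_pos zero_less_mult_pos)
  then show ?thesis using assms by (simp add: divide_simps mult.commute)
qed

lemma AE_bnd:
  assumes "bnd N w M"
  shows "AE t in N. 0 \<le> t \<and> 0 < cmod (1 + w * of_real t) \<and> t / cmod (1 + w * of_real t) \<le> M
     \<and> 1 / cmod (1 + w * of_real t) \<le> M"
proof -
  have M: "M > 0" using assms unfolding bnd_def by simp
  have "AE t in N. 0 \<le> t \<and> t \<le> M * cmod (1 + w * of_real t) \<and> 1 \<le> M * cmod (1 + w * of_real t)"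
    using assms unfolding bnd_def by simp
  then show ?thesis
  proof eventually_elim
    case (elim t) then show ?case using ptw_bnd[of t M "cmod (1 + w * of_real t)"] M by auto
  qed
qed

lemma bnd_pos: "bnd N w M \<Longrightarrow> M > 0" unfolding bnd_def by simp

lemma prod_le: "0 \<le> (a::real) \<Longrightarrow> 0 \<le> b \<Longrightarrow> a \<le> M \<Longrightarrow> b \<le> K \<Longrightarrow> a * b \<le> M * K"
  by (meson mult_mono order_trans)

lemma int_F:
  assumes "pr N" "bnd N w M"
  shows "integrable N (\<lambda>t. complex_of_real t / (- z * (1 + w * complex_of_real t)))"
proof (rule pr_int[OF assms(1), where C="M / cmod z"])
  show "(\<lambda>t. complex_of_real t / (- z * (1 + w * complex_of_real t))) \<in> borel_measurable borel" by measurable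
  show "AE t in N. norm (complex_of_real t / (- z * (1 + w * complex_of_real t))) \<le> M / cmod z"
    using AE_bnd[OF assms(2)] by eventually_elim (simp add: norm_mult norm_divide divide_simps mult.commute)
qed

lemma int_M:
  assumes "pr N" "bnd N w M"
  shows "integrable N (\<lambda>t. 1 / (- z * (1 + w * complex_of_real t)))"
proof (rule pr_int[OF assms(1), where C="M / cmod z"])
  show "(\<lambda>t. 1 / (- z * (1 + w * complex_of_real t))) \<in> borel_measurable borel" by measurable
  show "AE t in N. norm (1 / (- z * (1 + w * complex_of_real t))) \<le> M / cmod z"
    using AE_bnd[OF assms(2)] by eventually_elim (simp add: norm_mult norm_divide divide_simps mult.commute)
qed

lemma int_I2:
  assumes "pr N" "bnd N w M"
  shows "integrable N (\<lambda>t. t\<^sup>2 / (cmod (1 + w * complex_of_real t))\<^sup>2)"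
proof (rule pr_int[OF assms(1), where C="M*M"])
  show "(\<lambda>t. t\<^sup>2 / (cmod (1 + w * complex_of_real t))\<^sup>2) \<in> borel_measurable borel" by measurable
  show "AE t in N. norm (t\<^sup>2 / (cmod (1 + w * complex_of_real t))\<^sup>2) \<le> M*M"
    using AE_bnd[OF assms(2)]
  proof eventually_elim
    case (elim t)
    have "t\<^sup>2 / (cmod (1 + w * complex_of_real t))\<^sup>2 = (t / cmod (1 + w * complex_of_real t)) * (t / cmod (1 + w * complex_of_real t))"
      by (simp add: power2_eq_square)
    also have "\<dots> \<le> M * M" using elim by (intro prod_le) auto
    finally show ?case by simp
  qed
qed

lemma int_I1:
  assumes "pr N" "bnd N w M"
  shows "integrable N (\<lambda>t. t / (cmod (1 + w * complex_of_real t))\<^sup>2)"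
proof (rule pr_int[OF assms(1), where C="M*M"])
  show "(\<lambda>t. t / (cmod (1 + w * complex_of_real t))\<^sup>2) \<in> borel_measurable borel" by measurable
  show "AE t in N. norm (t / (cmod (1 + w * complex_of_real t))\<^sup>2) \<le> M*M"
    using AE_bnd[OF assms(2)]
  proof eventually_elim
    case (elim t)
    have "t / (cmod (1 + w * complex_of_real t))\<^sup>2 = (t / cmod (1 + w * complex_of_real t)) * (1 / cmod (1 + w * complex_of_real t))"
      by (simp add: power2_eq_square)
    also have "\<dots> \<le> M * M" using elim by (intro prod_le) auto
    finally show ?case using elim by simp
  qed
qed

lemma int_I0:
  assumes "pr N" "bnd N w M"
  shows "integrable N (\<lambda>t. 1 / (cmod (1 + w * complex_of_real t))\<^sup>2)"
proof (rule pr_int[OF assms(1), where C="M*M"])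
  show "(\<lambda>t. 1 / (cmod (1 + w * complex_of_real t))\<^sup>2) \<in> borel_measurable borel" by measurable
  show "AE t in N. norm (1 / (cmod (1 + w * complex_of_real t))\<^sup>2) \<le> M*M"
    using AE_bnd[OF assms(2)]
  proof eventually_elim
    case (elim t)
    have "1 / (cmod (1 + w * complex_of_real t))\<^sup>2 = (1 / cmod (1 + w * complex_of_real t)) * (1 / cmod (1 + w * complex_of_real t))"
      by (simp add: power2_eq_square)
    also have "\<dots> \<le> M * M" using elim by (intro prod_le) auto
    finally show ?case using elim by simp
  qed
qed

lemma int_cross:
  assumes "pr N" "bnd N w1 M1" "bnd N w2 M2"
  shows "integrable N (\<lambda>t. (t / cmod (1 + w1 * complex_of_real t)) * (t / cmod (1 + w2 * complex_of_real t)))"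
proof (rule pr_int[OF assms(1), where C="M1*M2"])
  show "(\<lambda>t. (t / cmod (1 + w1 * complex_of_real t)) * (t / cmod (1 + w2 * complex_of_real t))) \<in> borel_measurable borel" by measurable
  show "AE t in N. norm ((t / cmod (1 + w1 * complex_of_real t)) * (t / cmod (1 + w2 * complex_of_real t))) \<le> M1*M2"
    using AE_bnd[OF assms(2)] AE_bnd[OF assms(3)]
  proof eventually_elim
    case (elim t)
    have "0 \<le> t / cmod (1 + w1 * complex_of_real t)" "0 \<le> t / cmod (1 + w2 * complex_of_real t)" using elim by auto
    then have "\<bar>(t / cmod (1 + w1 * complex_of_real t)) * (t / cmod (1 + w2 * complex_of_real t))\<bar> =
      (t / cmod (1 + w1 * complex_of_real t)) * (t / cmod (1 + w2 * complex_of_real t))" by simp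
    also have "\<dots> \<le> M1 * M2" using elim by (intro prod_le) auto
    finally show ?case by simp
  qed
qed

lemma I2_nonneg: "0 \<le> I2 N w" unfolding I2_def by (rule integral_nonneg_AE) auto
lemma I1_nonneg: assumes "bnd N w M" shows "0 \<le> I1 N w" unfolding I1_def
  by (rule integral_nonneg_AE) (use AE_bnd[OF assms] in \<open>eventually_elim, simp\<close>)
lemma I0_nonneg: "0 \<le> I0 N w" unfolding I0_def by (rule integral_nonneg_AE) auto



lemma lin2:
  fixes g1 g2 :: "'a \<Rightarrow> real"
  assumes "integrable M g1" "integrable M g2"
  shows "(\<integral>t. (a * g1 t + b * g2 t) / P \<partial>M) = (a * (\<integral>t. g1 t \<partial>M) + b * (\<integral>t. g2 t \<partial>M)) / P"
proof -
  have "(\<integral>t. a * g1 t + b * g2 t \<partial>M) = (\<integral>t. a * g1 t \<partial>M) + (\<integral>t. b * g2 t \<partial>M)"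
    by (rule Bochner_Integration.integral_add) (auto intro: assms)
  then show ?thesis by (simp only: integral_divide_zero integral_mult_right_zero)
qed

lemma Im_Fk:
  assumes "pr N" "bnd N w M" "z \<noteq> 0"
  shows "Im (Fk N w z) = (Im z * I1 N w + Im (z * w) * I2 N w) / (cmod z)\<^sup>2"
proof -
  have "Im (Fk N w z) = (\<integral>t. Im (complex_of_real t / (- z * (1 + w * complex_of_real t))) \<partial>N)"
    unfolding Fk_def using int_F[OF assms(1,2)] by simp
  also have "\<dots> = (\<integral>t. (Im z * (t / (cmod (1 + w * of_real t))\<^sup>2) + Im (z * w) * (t\<^sup>2 / (cmod (1 + w * of_real t))\<^sup>2)) / (cmod z)\<^sup>2 \<partial>N)"
  proof (rule integral_cong_AE)
    show "(\<lambda>t. Im (complex_of_real t / (- z * (1 + w * complex_of_real t)))) \<in> borel_measurable N"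
      by (rule pr_meas[OF assms(1)]) measurable
    show "(\<lambda>t. (Im z * (t / (cmod (1 + w * of_real t))\<^sup>2) + Im (z * w) * (t\<^sup>2 / (cmod (1 + w * of_real t))\<^sup>2)) / (cmod z)\<^sup>2) \<in> borel_measurable N"
      by (rule pr_meas[OF assms(1)]) measurable
    show "AE t in N. Im (complex_of_real t / (- z * (1 + w * complex_of_real t))) = (Im z * (t / (cmod (1 + w * of_real t))\<^sup>2) + Im (z * w) * (t\<^sup>2 / (cmod (1 + w * of_real t))\<^sup>2)) / (cmod z)\<^sup>2"
      using AE_bnd[OF assms(2)] by eventually_elim (rule ptw_Im1[OF assms(3)], auto)
  qed
  also have "\<dots> = (Im z * I1 N w + Im (z * w) * I2 N w) / (cmod z)\<^sup>2"
    unfolding I1_def I2_def by (rule lin2[OF int_I1[OF assms(1,2)] int_I2[OF assms(1,2)]])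
  finally show ?thesis .
qed

lemma Im_Mk:
  assumes "pr N" "bnd N w M" "z \<noteq> 0"
  shows "Im (Mk N w z) = (Im z * I0 N w + Im (z * w) * I1 N w) / (cmod z)\<^sup>2"
proof -
  have "Im (Mk N w z) = (\<integral>t. Im (1 / (- z * (1 + w * complex_of_real t))) \<partial>N)"
    unfolding Mk_def using int_M[OF assms(1,2)] by simp
  also have "\<dots> = (\<integral>t. (Im z * (1 / (cmod (1 + w * of_real t))\<^sup>2) + Im (z * w) * (t / (cmod (1 + w * of_real t))\<^sup>2)) / (cmod z)\<^sup>2 \<partial>N)"
  proof (rule integral_cong_AE)
    show "(\<lambda>t. Im (1 / (- z * (1 + w * complex_of_real t)))) \<in> borel_measurable N"
      by (rule pr_meas[OF assms(1)]) measurable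
    show "(\<lambda>t. (Im z * (1 / (cmod (1 + w * of_real t))\<^sup>2) + Im (z * w) * (t / (cmod (1 + w * of_real t))\<^sup>2)) / (cmod z)\<^sup>2) \<in> borel_measurable N"
      by (rule pr_meas[OF assms(1)]) measurable
    show "AE t in N. Im (1 / (- z * (1 + w * complex_of_real t))) = (Im z * (1 / (cmod (1 + w * of_real t))\<^sup>2) + Im (z * w) * (t / (cmod (1 + w * of_real t))\<^sup>2)) / (cmod z)\<^sup>2"
      using AE_bnd[OF assms(2)] by eventually_elim (rule ptw_Im0[OF assms(3)], auto)
  qed
  also have "\<dots> = (Im z * I0 N w + Im (z * w) * I1 N w) / (cmod z)\<^sup>2"
    unfolding I1_def I0_def by (rule lin2[OF int_I0[OF assms(1,2)] int_I1[OF assms(1,2)]])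
  finally show ?thesis .
qed

lemma Im_zFk:
  assumes "pr N" "bnd N w M" "z \<noteq> 0"
  shows "Im (z * Fk N w z) = Im w * I2 N w"
proof -
  have "z * Fk N w z = (\<integral>t. z * (complex_of_real t / (- z * (1 + w * complex_of_real t))) \<partial>N)"
    by (simp only: Fk_def integral_mult_right_zero)
  then have "Im (z * Fk N w z) = (\<integral>t. Im (z * (complex_of_real t / (- z * (1 + w * complex_of_real t)))) \<partial>N)"
    using integral_Im[OF integrable_mult_right[OF int_F[OF assms(1,2)]], of z z] by simp
  also have "\<dots> = (\<integral>t. Im w * (t\<^sup>2 / (cmod (1 + w * of_real t))\<^sup>2) \<partial>N)"
  proof (rule integral_cong_AE)
    show "(\<lambda>t. Im (z * (complex_of_real t / (- z * (1 + w * complex_of_real t))))) \<in> borel_measurable N"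
      by (rule pr_meas[OF assms(1)]) measurable
    show "(\<lambda>t. Im w * (t\<^sup>2 / (cmod (1 + w * of_real t))\<^sup>2)) \<in> borel_measurable N"
      by (rule pr_meas[OF assms(1)]) measurable
    show "AE t in N. Im (z * (complex_of_real t / (- z * (1 + w * complex_of_real t)))) = Im w * (t\<^sup>2 / (cmod (1 + w * of_real t))\<^sup>2)"
      using AE_bnd[OF assms(2)] by eventually_elim (rule ptw_Imz[OF assms(3)], auto)
  qed
  also have "\<dots> = Im w * I2 N w" unfolding I2_def by (rule integral_mult_right_zero)
  finally show ?thesis .
qed

lemma CS_int:
  fixes f g :: "'a \<Rightarrow> real"
  assumes "integrable M (\<lambda>t. (f t)\<^sup>2)" "integrable M (\<lambda>t. (g t)\<^sup>2)" "integrable M (\<lambda>t. f t * g t)"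
  shows "(\<integral>t. f t * g t \<partial>M) \<le> sqrt (\<integral>t. (f t)\<^sup>2 \<partial>M) * sqrt (\<integral>t. (g t)\<^sup>2 \<partial>M)"
proof -
  define xA where "xA = (\<integral>t. (f t)\<^sup>2 \<partial>M)"
  define yB where "yB = (\<integral>t. (g t)\<^sup>2 \<partial>M)"
  define zC where "zC = (\<integral>t. f t * g t \<partial>M)"
  have B0: "0 \<le> yB" unfolding yB_def by (rule integral_nonneg_AE) auto
  have A0: "0 \<le> xA" unfolding xA_def by (rule integral_nonneg_AE) auto
  have q: "0 \<le> xA - 2*u*zC + u\<^sup>2*yB" for u
  proof -
    have "0 \<le> (\<integral>t. (f t - u * g t)\<^sup>2 \<partial>M)" by (rule integral_nonneg_AE) auto
    also have "(\<integral>t. (f t - u * g t)\<^sup>2 \<partial>M) = (\<integral>t. (f t)\<^sup>2 - 2*u*(f t * g t) + u\<^sup>2 * (g t)\<^sup>2 \<partial>M)"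
      by (rule Bochner_Integration.integral_cong) (auto simp: power2_eq_square algebra_simps)
    also have "\<dots> = xA - 2*u*zC + u\<^sup>2*yB" unfolding xA_def yB_def zC_def using assms by simp
    finally show ?thesis .
  qed
  show ?thesis
  proof (cases "zC \<le> 0")
    case True then show ?thesis unfolding zC_def[symmetric] xA_def[symmetric] yB_def[symmetric] using A0 B0 by (smt (verit) real_sqrt_ge_zero mult_nonneg_nonneg)
  next
    case False
    show ?thesis
    proof (cases "yB = 0")
      case True
      have "0 \<le> xA - 2*((xA+1)/(2*zC))*zC + ((xA+1)/(2*zC))\<^sup>2*yB" by (rule q)
      then show ?thesis using True False by simp
    next
      case Bp: False
      have "0 \<le> xA - 2*(zC/yB)*zC + (zC/yB)\<^sup>2*yB" by (rule q)
      then have "zC\<^sup>2 \<le> xA * yB" using Bp B0 by (simp add: field_simps power2_eq_square)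
      then have "zC \<le> sqrt (xA * yB)" using False by (simp add: real_le_rsqrt)
      then show ?thesis unfolding zC_def[symmetric] xA_def[symmetric] yB_def[symmetric] by (simp add: real_sqrt_mult)
    qed
  qed
qed

lemma aux_diff: "(z::complex) \<noteq> 0 \<Longrightarrow> A1 \<noteq> 0 \<Longrightarrow> A2 \<noteq> 0 \<Longrightarrow>
   a / (- z * A1) - a / (- z * A2) = a * (A1 - A2) / (z * A1 * A2)"
  by (simp add: field_simps)

lemma ptw_diff:
  fixes z w1 w2 :: complex and t :: real
  assumes "z \<noteq> 0" "1 + w1 * of_real t \<noteq> 0" "1 + w2 * of_real t \<noteq> 0" "0 \<le> t"
  shows "cmod (of_real t / (- z * (1 + w1 * of_real t)) - of_real t / (- z * (1 + w2 * of_real t)))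
     = cmod (w1 - w2) / cmod z * ((t / cmod (1 + w1 * of_real t)) * (t / cmod (1 + w2 * of_real t)))"
proof -
  have "of_real t / (- z * (1 + w1 * of_real t)) - of_real t / (- z * (1 + w2 * of_real t))
     = of_real t * ((1 + w1 * of_real t) - (1 + w2 * of_real t)) / (z * (1 + w1 * of_real t) * (1 + w2 * of_real t))"
    by (rule aux_diff[OF assms(1-3)])
  also have "(1 + w1 * of_real t) - (1 + w2 * of_real t) = (w1 - w2) * of_real t" by (simp add: algebra_simps)
  finally have e: "of_real t / (- z * (1 + w1 * of_real t)) - of_real t / (- z * (1 + w2 * of_real t))
     = of_real t * ((w1 - w2) * of_real t) / (z * (1 + w1 * of_real t) * (1 + w2 * of_real t))" .
  have "cmod (of_real t * ((w1 - w2) * of_real t) / (z * (1 + w1 * of_real t) * (1 + w2 * of_real t)))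
     = t * (cmod (w1 - w2) * t) / (cmod z * cmod (1 + w1 * of_real t) * cmod (1 + w2 * of_real t))"
    using assms(4) by (simp add: norm_mult norm_divide)
  also have "\<dots> = cmod (w1 - w2) / cmod z * ((t / cmod (1 + w1 * of_real t)) * (t / cmod (1 + w2 * of_real t)))"
    by (simp add: field_simps)
  finally show ?thesis unfolding e .
qed

lemma diff_Fk:
  assumes "pr N" "bnd N w1 M1" "bnd N w2 M2" "z \<noteq> 0"
  shows "cmod (Fk N w1 z - Fk N w2 z) \<le> cmod (w1 - w2) / cmod z * (sqrt (I2 N w1) * sqrt (I2 N w2))"
proof -
  let ?f1 = "\<lambda>t. complex_of_real t / (- z * (1 + w1 * complex_of_real t))"
  let ?f2 = "\<lambda>t. complex_of_real t / (- z * (1 + w2 * complex_of_real t))"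
  let ?g1 = "\<lambda>t. t / cmod (1 + w1 * complex_of_real t)"
  let ?g2 = "\<lambda>t. t / cmod (1 + w2 * complex_of_real t)"
  have "Fk N w1 z - Fk N w2 z = (\<integral>t. ?f1 t - ?f2 t \<partial>N)"
    unfolding Fk_def by (rule Bochner_Integration.integral_diff[symmetric, OF int_F[OF assms(1,2)] int_F[OF assms(1,3)]])
  then have "cmod (Fk N w1 z - Fk N w2 z) \<le> (\<integral>t. cmod (?f1 t - ?f2 t) \<partial>N)"
    by (simp add: integral_norm_bound)
  also have "\<dots> = (\<integral>t. cmod (w1 - w2) / cmod z * (?g1 t * ?g2 t) \<partial>N)"
  proof (rule integral_cong_AE)
    show "(\<lambda>t. cmod (?f1 t - ?f2 t)) \<in> borel_measurable N" by (rule pr_meas[OF assms(1)]) measurable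
    show "(\<lambda>t. cmod (w1 - w2) / cmod z * (?g1 t * ?g2 t)) \<in> borel_measurable N" by (rule pr_meas[OF assms(1)]) measurable
    show "AE t in N. cmod (?f1 t - ?f2 t) = cmod (w1 - w2) / cmod z * (?g1 t * ?g2 t)"
      using AE_bnd[OF assms(2)] AE_bnd[OF assms(3)] by eventually_elim (rule ptw_diff[OF assms(4)], auto)
  qed
  also have "\<dots> = cmod (w1 - w2) / cmod z * (\<integral>t. ?g1 t * ?g2 t \<partial>N)" by (rule integral_mult_right_zero)
  also have "\<dots> \<le> cmod (w1 - w2) / cmod z * (sqrt (\<integral>t. (?g1 t)\<^sup>2 \<partial>N) * sqrt (\<integral>t. (?g2 t)\<^sup>2 \<partial>N))"
  proof (intro mult_left_mono CS_int)
    show "integrable N (\<lambda>t. (?g1 t)\<^sup>2)" using int_I2[OF assms(1,2)] by (simp add: power_divide)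
    show "integrable N (\<lambda>t. (?g2 t)\<^sup>2)" using int_I2[OF assms(1,3)] by (simp add: power_divide)
    show "integrable N (\<lambda>t. ?g1 t * ?g2 t)" by (rule int_cross[OF assms(1,2,3)])
  qed simp
  also have "\<dots> = cmod (w1 - w2) / cmod z * (sqrt (I2 N w1) * sqrt (I2 N w2))"
    unfolding I2_def by (simp add: power_divide)
  finally show ?thesis .
qed



definition Kk :: "real measure \<Rightarrow> complex \<Rightarrow> complex" where
  "Kk N w = (\<integral>t. complex_of_real t / (1 + w * complex_of_real t) \<partial>N)"

lemma pr_const_int: "pr N \<Longrightarrow> integrable N (\<lambda>t. C::real)"
  unfolding pr_def using prob_space.finite_measure finite_measure.integrable_const by blast
lemma pr_const_integral: "pr N \<Longrightarrow> (\<integral>t. C \<partial>N) = (C::real)"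
  unfolding pr_def by (simp add: prob_space.prob_space)

lemma Fk_Kk: "Fk N w z = - Kk N w / z"
proof -
  have "Fk N w z = (\<integral>t. (complex_of_real t / (1 + w * complex_of_real t)) / (- z) \<partial>N)"
    unfolding Fk_def by (rule Bochner_Integration.integral_cong) (auto simp: divide_inverse mult_ac)
  also have "\<dots> = Kk N w / (- z)" unfolding Kk_def by (rule integral_divide_zero)
  also have "\<dots> = - Kk N w / z" by simp
  finally show ?thesis .
qed

lemma Kk_bound:
  assumes "pr N" "bnd N w M"
  shows "cmod (Kk N w) \<le> M"
proof -
  have "cmod (Kk N w) \<le> (\<integral>t. cmod (complex_of_real t / (1 + w * complex_of_real t)) \<partial>N)"
    unfolding Kk_def by (rule integral_norm_bound)
  also have "\<dots> \<le> (\<integral>t. M \<partial>N)"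
  proof (rule integral_mono_AE)
    show "integrable N (\<lambda>t. cmod (complex_of_real t / (1 + w * complex_of_real t)))"
      by (rule pr_int[OF assms(1), where C=M]) (measurable, use AE_bnd[OF assms(2)] in \<open>eventually_elim, simp add: norm_divide\<close>)
    show "integrable N (\<lambda>t. M)" using assms(1) by (rule pr_const_int)
    show "AE t in N. cmod (complex_of_real t / (1 + w * complex_of_real t)) \<le> M"
      using AE_bnd[OF assms(2)] by eventually_elim (simp add: norm_divide)
  qed
  also have "\<dots> = M" using assms(1) by (rule pr_const_integral)
  finally show ?thesis .
qed

lemma I2_bound:
  assumes "pr N" "bnd N w M"
  shows "I2 N w \<le> M * M"
proof -
  have "I2 N w \<le> (\<integral>t. M * M \<partial>N)" unfolding I2_def
  proof (rule integral_mono_AE)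
    show "integrable N (\<lambda>t. t\<^sup>2 / (cmod (1 + w * complex_of_real t))\<^sup>2)" by (rule int_I2[OF assms])
    show "integrable N (\<lambda>t. M * M)" using assms(1) by (rule pr_const_int)
    show "AE t in N. t\<^sup>2 / (cmod (1 + w * complex_of_real t))\<^sup>2 \<le> M * M"
      using AE_bnd[OF assms(2)]
    proof eventually_elim
      case (elim t)
      have "t\<^sup>2 / (cmod (1 + w * complex_of_real t))\<^sup>2 = (t / cmod (1 + w * complex_of_real t)) * (t / cmod (1 + w * complex_of_real t))"
        by (simp add: power2_eq_square)
      also have "\<dots> \<le> M * M" using elim by (intro prod_le) auto
      finally show ?case .
    qed
  qed
  also have "\<dots> = M * M" using assms(1) by (rule pr_const_integral)
  finally show ?thesis .
qed

lemma I1_bound: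
  assumes "pr N" "bnd N w M"
  shows "I1 N w \<le> M * M"
proof -
  have "I1 N w \<le> (\<integral>t. M * M \<partial>N)" unfolding I1_def
  proof (rule integral_mono_AE)
    show "integrable N (\<lambda>t. t / (cmod (1 + w * complex_of_real t))\<^sup>2)" by (rule int_I1[OF assms])
    show "integrable N (\<lambda>t. M * M)" using assms(1) by (rule pr_const_int)
    show "AE t in N. t / (cmod (1 + w * complex_of_real t))\<^sup>2 \<le> M * M"
      using AE_bnd[OF assms(2)]
    proof eventually_elim
      case (elim t)
      have "t / (cmod (1 + w * complex_of_real t))\<^sup>2 = (t / cmod (1 + w * complex_of_real t)) * (1 / cmod (1 + w * complex_of_real t))"
        by (simp add: power2_eq_square)
      also have "\<dots> \<le> M * M" using elim by (intro prod_le) auto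
      finally show ?case .
    qed
  qed
  also have "\<dots> = M * M" using assms(1) by (rule pr_const_integral)
  finally show ?thesis .
qed

lemma I0_bound:
  assumes "pr N" "bnd N w M"
  shows "I0 N w \<le> M * M"
proof -
  have "I0 N w \<le> (\<integral>t. M * M \<partial>N)" unfolding I0_def
  proof (rule integral_mono_AE)
    show "integrable N (\<lambda>t. 1 / (cmod (1 + w * complex_of_real t))\<^sup>2)" by (rule int_I0[OF assms])
    show "integrable N (\<lambda>t. M * M)" using assms(1) by (rule pr_const_int)
    show "AE t in N. 1 / (cmod (1 + w * complex_of_real t))\<^sup>2 \<le> M * M"
      using AE_bnd[OF assms(2)]
    proof eventually_elim
      case (elim t)
      have "1 / (cmod (1 + w * complex_of_real t))\<^sup>2 = (1 / cmod (1 + w * complex_of_real t)) * (1 / cmod (1 + w * complex_of_real t))"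
        by (simp add: power2_eq_square)
      also have "\<dots> \<le> M * M" using elim by (intro prod_le) auto
      finally show ?case .
    qed
  qed
  also have "\<dots> = M * M" using assms(1) by (rule pr_const_integral)
  finally show ?thesis .
qed

lemma cont_Fk:
  assumes "pr N" "bnd N w0 M" "cmod (w - w0) \<le> 1 / (2*M)" "z \<noteq> 0"
  shows "cmod (Fk N w z - Fk N w0 z0) \<le> cmod (w - w0) / cmod z * (2*M*M) + cmod (1/z - 1/z0) * M"
proof -
  have b: "bnd N w (2*M)" by (rule bnd_pert[OF assms(2,3)])
  have M: "M > 0" using bnd_pos[OF assms(2)] .
  have "cmod (Fk N w z - Fk N w0 z) \<le> cmod (w - w0) / cmod z * (sqrt (I2 N w) * sqrt (I2 N w0))"
    by (rule diff_Fk[OF assms(1) b assms(2,4)])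
  also have "sqrt (I2 N w) * sqrt (I2 N w0) \<le> (2*M) * M"
  proof (rule prod_le)
    show "sqrt (I2 N w) \<le> 2*M" using I2_bound[OF assms(1) b] M
      by (intro real_le_lsqrt) (auto simp: power2_eq_square)
    show "sqrt (I2 N w0) \<le> M" using I2_bound[OF assms(1,2)] M
      by (intro real_le_lsqrt) (auto simp: power2_eq_square)
  qed (auto simp: I2_nonneg)
  then have "cmod (w - w0) / cmod z * (sqrt (I2 N w) * sqrt (I2 N w0)) \<le> cmod (w - w0) / cmod z * (2*M*M)"
    by (intro mult_left_mono) auto
  finally have 1: "cmod (Fk N w z - Fk N w0 z) \<le> cmod (w - w0) / cmod z * (2*M*M)" .
  have "Fk N w0 z - Fk N w0 z0 = (1/z0 - 1/z) * Kk N w0" unfolding Fk_Kk by (simp add: field_simps)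
  then have "cmod (Fk N w0 z - Fk N w0 z0) = cmod (1/z - 1/z0) * cmod (Kk N w0)"
    by (simp add: norm_mult norm_minus_commute)
  also have "\<dots> \<le> cmod (1/z - 1/z0) * M" by (intro mult_left_mono Kk_bound[OF assms(1,2)]) auto
  finally have 2: "cmod (Fk N w0 z - Fk N w0 z0) \<le> cmod (1/z - 1/z0) * M" .
  have "cmod (Fk N w z - Fk N w0 z0) \<le> cmod (Fk N w z - Fk N w0 z) + cmod (Fk N w0 z - Fk N w0 z0)"
    by (rule norm_diff_triangle_ineq[THEN order_trans[rotated]]) simp
  then show ?thesis using 1 2 by linarith
qed

lemma ptw_I2diff:
  fixes a b d M :: real
  assumes "0 \<le> a" "0 \<le> b" "a \<le> 2*M" "b \<le> M" "\<bar>a - b\<bar> \<le> a * b * d" "0 \<le> d"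
  shows "\<bar>a\<^sup>2 - b\<^sup>2\<bar> \<le> 6 * M^3 * d"
proof -
  have "a\<^sup>2 - b\<^sup>2 = (a - b) * (a + b)" by (simp add: algebra_simps power2_eq_square)
  then have "\<bar>a\<^sup>2 - b\<^sup>2\<bar> = \<bar>a - b\<bar> * (a + b)" using assms by (simp add: abs_mult)
  also have "\<dots> \<le> (a * b * d) * (a + b)" using assms by (intro mult_right_mono) auto
  also have "\<dots> \<le> ((2*M) * M * d) * (3*M)" using assms
    by (intro mult_mono) (auto intro!: mult_mono mult_nonneg_nonneg)
  also have "\<dots> = 6 * M^3 * d" by (simp add: power3_eq_cube)
  finally show ?thesis .
qed

lemma I2_diff:
  assumes "pr N" "bnd N w0 M" "cmod (w - w0) \<le> 1 / (2*M)"
  shows "\<bar>I2 N w - I2 N w0\<bar> \<le> 6 * M^3 * cmod (w - w0)"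
proof -
  have b: "bnd N w (2*M)" by (rule bnd_pert[OF assms(2,3)])
  have "I2 N w - I2 N w0 = (\<integral>t. t\<^sup>2 / (cmod (1 + w * complex_of_real t))\<^sup>2 - t\<^sup>2 / (cmod (1 + w0 * complex_of_real t))\<^sup>2 \<partial>N)"
    unfolding I2_def by (rule Bochner_Integration.integral_diff[symmetric, OF int_I2[OF assms(1) b] int_I2[OF assms(1,2)]])
  then have "\<bar>I2 N w - I2 N w0\<bar> \<le> (\<integral>t. \<bar>t\<^sup>2 / (cmod (1 + w * complex_of_real t))\<^sup>2 - t\<^sup>2 / (cmod (1 + w0 * complex_of_real t))\<^sup>2\<bar> \<partial>N)"
    using integral_norm_bound[of N "\<lambda>t. t\<^sup>2 / (cmod (1 + w * complex_of_real t))\<^sup>2 - t\<^sup>2 / (cmod (1 + w0 * complex_of_real t))\<^sup>2"]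
    by simp
  also have "\<dots> \<le> (\<integral>t. 6 * M^3 * cmod (w - w0) \<partial>N)"
  proof (rule integral_mono_AE)
    show "integrable N (\<lambda>t. \<bar>t\<^sup>2 / (cmod (1 + w * complex_of_real t))\<^sup>2 - t\<^sup>2 / (cmod (1 + w0 * complex_of_real t))\<^sup>2\<bar>)"
      by (intro integrable_abs Bochner_Integration.integrable_diff int_I2[OF assms(1) b] int_I2[OF assms(1,2)])
    show "integrable N (\<lambda>t. 6 * M^3 * cmod (w - w0))" using assms(1) by (rule pr_const_int)
    show "AE t in N. \<bar>t\<^sup>2 / (cmod (1 + w * complex_of_real t))\<^sup>2 - t\<^sup>2 / (cmod (1 + w0 * complex_of_real t))\<^sup>2\<bar> \<le> 6 * M^3 * cmod (w - w0)"
      using AE_bnd[OF assms(2)] AE_bnd[OF b]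
    proof eventually_elim
      case (elim t)
      define p where "p = cmod (1 + w * complex_of_real t)"
      define q where "q = cmod (1 + w0 * complex_of_real t)"
      have pq: "p > 0" "q > 0" using elim unfolding p_def q_def by auto
      have "\<bar>p - q\<bar> \<le> cmod ((1 + w * complex_of_real t) - (1 + w0 * complex_of_real t))"
        unfolding p_def q_def by (rule norm_triangle_ineq3)
      also have "(1 + w * complex_of_real t) - (1 + w0 * complex_of_real t) = (w - w0) * complex_of_real t"
        by (simp add: algebra_simps)
      finally have dpq: "\<bar>p - q\<bar> \<le> cmod (w - w0) * t" using elim by (simp add: norm_mult)
      have "t / p - t / q = t * (q - p) / (p * q)" using pq by (simp add: field_simps)
      then have "\<bar>t / p - t / q\<bar> = t * \<bar>q - p\<bar> / (p * q)" using pq elim by (simp add: abs_mult abs_div)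
      also have "\<dots> \<le> t * (cmod (w - w0) * t) / (p * q)" using pq elim dpq
        by (intro divide_right_mono mult_left_mono) (auto simp: abs_minus_commute)
      also have "\<dots> = (t / p) * (t / q) * cmod (w - w0)" by (simp add: field_simps)
      finally have "\<bar>t / p - t / q\<bar> \<le> (t / p) * (t / q) * cmod (w - w0)" .
      then have "\<bar>(t/p)\<^sup>2 - (t/q)\<^sup>2\<bar> \<le> 6 * M^3 * cmod (w - w0)"
        using elim by (intro ptw_I2diff) (auto simp: p_def q_def)
      then show ?case by (simp add: p_def q_def power_divide)
    qed
  qed
  also have "\<dots> = 6 * M^3 * cmod (w - w0)" using assms(1) by (rule pr_const_integral)
  finally show ?thesis .
qed



lemma pr_space: "pr N \<Longrightarrow> space N = UNIV"
  unfolding pr_def by (metis sets_eq_imp_space_eq space_borel)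

lemma null_AE:
  assumes "pr N" "A \<in> sets borel" "emeasure N A = 0"
  shows "AE t in N. t \<notin> A"
proof -
  have s: "A \<in> sets N" using assms unfolding pr_def by simp
  show ?thesis by (subst AE_iff_measurable[OF s]) (auto simp: pr_space[OF assms(1)] assms(3))
qed

lemma rplus_pr: "prob_on_Rplus N \<Longrightarrow> pr N" unfolding prob_on_Rplus_def pr_def by simp

lemma rplus_AE: "prob_on_Rplus N \<Longrightarrow> AE t in N. 0 \<le> t"
  using null_AE[of N "{..<0}"] rplus_pr unfolding prob_on_Rplus_def by (auto simp: not_less)

lemma AE_msupp:
  assumes "pr N"
  shows "AE t in N. t \<in> msupp N"
proof -
  define F where "F = {ball y e | y e. e > 0 \<and> emeasure N (ball y e) = 0}"
  have op: "\<And>S. S \<in> F \<Longrightarrow> open S" unfolding F_def by auto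
  obtain F' where F': "F' \<subseteq> F" "countable F'" "\<Union>F' = \<Union>F" using Lindelof[OF op] by blast
  have U: "\<Union>F = - msupp N"
  proof
    show "\<Union>F \<subseteq> - msupp N"
    proof
      fix x assume "x \<in> \<Union>F"
      then obtain y e where ye: "x \<in> ball y e" "e > 0" "emeasure N (ball y e) = 0" unfolding F_def by auto
      have sub: "ball x (e - dist y x) \<subseteq> ball y e" by (auto simp: dist_commute) (metis dist_commute dist_triangle_lt add.commute less_diff_eq)
      have "emeasure N (ball x (e - dist y x)) \<le> emeasure N (ball y e)"
        by (rule emeasure_mono[OF sub]) (use assms in \<open>simp add: pr_def\<close>)
      then have "emeasure N (ball x (e - dist y x)) = 0" using ye by simp
      moreover have "e - dist y x > 0" using ye by simp
      ultimately show "x \<in> - msupp N" unfolding msupp_def by blast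
    qed
    show "- msupp N \<subseteq> \<Union>F"
    proof
      fix x assume "x \<in> - msupp N"
      then obtain e where "e > 0" "emeasure N (ball x e) = 0" unfolding msupp_def by auto
      then have "ball x e \<in> F" unfolding F_def by blast
      then show "x \<in> \<Union>F" using \<open>e > 0\<close> by (meson UnionI centre_in_ball)
    qed
  qed
  have "AE t in N. \<forall>B\<in>F'. t \<notin> B"
  proof (subst AE_ball_countable[OF F'(2)], intro ballI)
    fix B assume "B \<in> F'"
    then have "B \<in> F" using F' by auto
    then obtain y e where B: "B = ball y e" and n: "emeasure N (ball y e) = 0" unfolding F_def by auto
    have "AE t in N. t \<notin> ball y e" by (rule null_AE[OF assms _ n]) simp
    then show "AE t in N. t \<notin> B" by (simp add: B)
  qed
  then show ?thesis
  proof eventually_elim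
    case (elim t)
    then have "t \<notin> \<Union>F'" by auto
    then have "t \<notin> - msupp N" unfolding F'(3) U .
    then show ?case by simp
  qed
qed

lemma bnd_real_nz:
  assumes "prob_on_Rplus N" "d \<noteq> 0" "- inverse d \<notin> msupp N"
  shows "\<exists>M. bnd N (of_real d) M"
proof -
  obtain e where e: "e > 0" "emeasure N (ball (- inverse d) e) = 0"
    using assms(3) unfolding msupp_def by auto
  have "AE t in N. t \<notin> ball (- inverse d) e" using null_AE[OF rplus_pr[OF assms(1)] _ e(2)] by simp
  moreover have "AE t in N. 0 \<le> t" by (rule rplus_AE[OF assms(1)])
  ultimately have "AE t in N. 0 \<le> t \<and> t \<le> (1/\<bar>d\<bar> + 1/(d*d*e) + 1/(\<bar>d\<bar>*e)) * cmod (1 + of_real d * of_real t)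
       \<and> 1 \<le> (1/\<bar>d\<bar> + 1/(d*d*e) + 1/(\<bar>d\<bar>*e)) * cmod (1 + of_real d * of_real t)"
  proof eventually_elim
    case (elim t)
    have c: "cmod (1 + of_real d * of_real t) = \<bar>1 + d * t\<bar>"
      by (metis norm_of_real of_real_1 of_real_add of_real_mult)
    have dist: "e \<le> \<bar>t + inverse d\<bar>" using elim by (auto simp: dist_real_def)
    have "\<bar>1 + d * t\<bar> = \<bar>d\<bar> * \<bar>t + inverse d\<bar>" using assms(2)
      by (simp add: abs_mult[symmetric] algebra_simps)
    then have ge: "\<bar>d\<bar> * e \<le> \<bar>1 + d * t\<bar>" using dist assms(2) by simp
    have de: "\<bar>d\<bar> * e > 0" using e assms(2) by simp
    have t1: "t \<le> \<bar>t + inverse d\<bar> + 1/\<bar>d\<bar>"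
      using abs_triangle_ineq[of "t + inverse d" "- inverse d"] by (simp add: abs_inverse divide_inverse)
    have "\<bar>t + inverse d\<bar> = \<bar>1 + d * t\<bar> / \<bar>d\<bar>" using \<open>\<bar>1 + d * t\<bar> = \<bar>d\<bar> * \<bar>t + inverse d\<bar>\<close> assms(2) by simp
    moreover have "1/\<bar>d\<bar> \<le> \<bar>1 + d * t\<bar> / (d*d*e)"
    proof -
      have dd: "d*d*e = \<bar>d\<bar> * (\<bar>d\<bar>*e)" by (simp add: mult.assoc[symmetric] abs_mult_self_eq)
      have "1/\<bar>d\<bar> = (\<bar>d\<bar>*e) / (\<bar>d\<bar> * (\<bar>d\<bar>*e))" using de e(1) assms(2) by simp
      also have "\<dots> \<le> \<bar>1 + d * t\<bar> / (\<bar>d\<bar> * (\<bar>d\<bar>*e))" using ge de assms(2)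
        by (intro divide_right_mono) auto
      finally show ?thesis unfolding dd .
    qed
    ultimately have "t \<le> \<bar>1 + d * t\<bar> / \<bar>d\<bar> + \<bar>1 + d * t\<bar> / (d*d*e)" using t1 by linarith
    also have "\<dots> \<le> (1/\<bar>d\<bar> + 1/(d*d*e) + 1/(\<bar>d\<bar>*e)) * \<bar>1 + d * t\<bar>"
    proof -
      have "0 \<le> \<bar>1 + d * t\<bar> / (\<bar>d\<bar>*e)" using de by simp
      then show ?thesis by (simp add: distrib_right)
    qed
    finally have A: "t \<le> (1/\<bar>d\<bar> + 1/(d*d*e) + 1/(\<bar>d\<bar>*e)) * \<bar>1 + d * t\<bar>" .
    have "1 \<le> \<bar>1 + d * t\<bar> / (\<bar>d\<bar>*e)" using ge de by simp
    also have "\<dots> \<le> (1/\<bar>d\<bar> + 1/(d*d*e) + 1/(\<bar>d\<bar>*e)) * \<bar>1 + d * t\<bar>"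
    proof -
      have "0 \<le> \<bar>1 + d * t\<bar> / \<bar>d\<bar>" "0 \<le> \<bar>1 + d * t\<bar> / (d*d*e)" using de e(1) by auto
      then show ?thesis by (simp add: distrib_right)
    qed
    finally show ?case using A c elim by simp
  qed
  moreover have "1/\<bar>d\<bar> + 1/(d*d*e) + 1/(\<bar>d\<bar>*e) > 0"
  proof -
    have "1/\<bar>d\<bar> > 0" "1/(d*d*e) > 0" "1/(\<bar>d\<bar>*e) > 0" using e assms(2) by (auto simp: zero_less_mult_iff)
    then show ?thesis by linarith
  qed
  ultimately show ?thesis unfolding bnd_def by blast
qed

lemma bnd_zero:
  assumes "prob_on_Rplus N" "compact (msupp N)"
  shows "\<exists>M. bnd N 0 M"
proof -
  obtain R where R: "\<And>y. y \<in> msupp N \<Longrightarrow> \<bar>y\<bar> \<le> R"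
    using compact_imp_bounded[OF assms(2)] unfolding bounded_iff by auto
  have "AE t in N. 0 \<le> t \<and> t \<le> (1 + \<bar>R\<bar>) * cmod (1 + 0 * of_real t) \<and> 1 \<le> (1 + \<bar>R\<bar>) * cmod (1 + 0 * of_real t)"
    using AE_msupp[OF rplus_pr[OF assms(1)]] rplus_AE[OF assms(1)]
  proof eventually_elim
    case (elim t) then show ?case using R[of t] by auto
  qed
  then show ?thesis unfolding bnd_def by (intro exI[of _ "1 + \<bar>R\<bar>"]) auto
qed

lemma bnd_D:
  assumes "prob_on_Rplus N" "d \<in> Dset N"
  shows "\<exists>M. bnd N (of_real d) M"
proof (cases "d = 0")
  case True
  then have "compact (msupp N)" using assms(2) unfolding Dset_def by (auto split: if_splits)
  then show ?thesis using bnd_zero[OF assms(1)] True by simp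
next
  case False
  then have "- inverse d \<notin> msupp N" using assms(2) unfolding Dset_def by (auto split: if_splits)
  then show ?thesis using bnd_real_nz[OF assms(1) False] by simp
qed

lemma AE_zero_return:
  assumes "pr N" "AE t in N. t = 0"
  shows "N = return borel 0"
proof (rule measure_eqI)
  show "sets N = sets (return borel 0)" using assms(1) unfolding pr_def by simp
  fix A assume A: "A \<in> sets N"
  then have Ab: "A \<in> sets borel" using assms(1) unfolding pr_def by simp
  interpret prob_space N using assms(1) unfolding pr_def by simp
  show "emeasure N A = emeasure (return borel 0) A"
  proof (cases "0 \<in> A")
    case True
    have "AE t in N. t \<in> A" using assms(2) True by (auto elim!: AE_mp)
    then have "emeasure N A = 1" using A by (simp add: emeasure_eq_1_AE)
    then show ?thesis using Ab True by simp
  next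
    case False
    have "AE t in N. t \<notin> A" using assms(2) False by (auto elim!: AE_mp)
    then have "emeasure N A = 0" using null_AE Ab assms(1)
      by (subst (asm) AE_iff_measurable[OF A]) (auto simp: pr_space[OF assms(1)])
    then show ?thesis using Ab False by simp
  qed
qed

lemma I1_pos:
  assumes "pr N" "bnd N w M" "N \<noteq> return borel 0"
  shows "I1 N w > 0"
proof -
  have "I1 N w \<noteq> 0"
  proof
    assume "I1 N w = 0"
    moreover have "AE t in N. 0 \<le> t / (cmod (1 + w * complex_of_real t))\<^sup>2"
      using AE_bnd[OF assms(2)] by eventually_elim simp
    ultimately have "AE t in N. t / (cmod (1 + w * complex_of_real t))\<^sup>2 = 0"
      unfolding I1_def using integral_nonneg_eq_0_iff_AE[OF int_I1[OF assms(1,2)]] by blast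
    then have "AE t in N. t = 0" using AE_bnd[OF assms(2)] by eventually_elim auto
    then show False using AE_zero_return[OF assms(1)] assms(3) by simp
  qed
  then show ?thesis using I1_nonneg[OF assms(2)] by simp
qed



lemma aux_key1: "(Z::real) \<noteq> 0 \<Longrightarrow> X = c*((y*i1 + X*b*a)/Z) \<Longrightarrow> X*(Z - (c*a)*b) = y*(c*i1)"
  by (simp add: field_simps)
lemma aux_key2: "(Z::real) \<noteq> 0 \<Longrightarrow> X = (y*i1 + c*(X*a)*b)/Z \<Longrightarrow> X*(Z - (c*a)*b) = y*i1"
  by (simp add: field_simps)

lemma Im_ofr: "Im (complex_of_real c * w) = c * Im w" by simp

lemma key1:
  assumes "pr nu" "pr nut" "bnd nu dl M1" "bnd nut d M2" "z \<noteq> 0"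
    and "d = complex_of_real c * Fk nu dl z" "dl = Fk nut d z"
  shows "Im d * ((cmod z)\<^sup>2 - (c * I2 nu dl) * I2 nut d) = Im z * (c * I1 nu dl)"
proof -
  have z2: "(cmod z)\<^sup>2 \<noteq> 0" using assms(5) by simp
  have a: "Im (z * dl) = Im d * I2 nut d" using Im_zFk[OF assms(2,4,5)] assms(7) by simp
  have "Im d = c * Im (Fk nu dl z)" using assms(6) by simp
  also have "\<dots> = c * ((Im z * I1 nu dl + Im (z * dl) * I2 nu dl) / (cmod z)\<^sup>2)"
    using Im_Fk[OF assms(1,3,5)] by simp
  finally have "Im d = c * ((Im z * I1 nu dl + Im d * I2 nut d * I2 nu dl) / (cmod z)\<^sup>2)"
    unfolding a .
  then show ?thesis by (rule aux_key1[OF z2])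
qed

lemma key2:
  assumes "pr nu" "pr nut" "bnd nu dl M1" "bnd nut d M2" "z \<noteq> 0"
    and "d = complex_of_real c * Fk nu dl z" "dl = Fk nut d z"
  shows "Im dl * ((cmod z)\<^sup>2 - (c * I2 nu dl) * I2 nut d) = Im z * I1 nut d"
proof -
  have z2: "(cmod z)\<^sup>2 \<noteq> 0" using assms(5) by simp
  have "z * d = complex_of_real c * (z * Fk nu dl z)" using assms(6) by (simp add: mult.left_commute)
  then have "Im (z * d) = c * Im (z * Fk nu dl z)" by (simp only: Im_ofr)
  then have a: "Im (z * d) = c * (Im dl * I2 nu dl)" using Im_zFk[OF assms(1,3,5)] by simp
  have "Im dl = (Im z * I1 nut d + Im (z * d) * I2 nut d) / (cmod z)\<^sup>2"
    using Im_Fk[OF assms(2,4,5)] assms(7) by simp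
  then have "Im dl = (Im z * I1 nut d + c * (Im dl * I2 nu dl) * I2 nut d) / (cmod z)\<^sup>2"
    unfolding a .
  then show ?thesis by (rule aux_key2[OF z2])
qed

lemma keym:
  assumes "pr nu" "pr nut" "bnd nu dl M1" "bnd nut d M2" "z \<noteq> 0"
    and "dl = Fk nut d z"
  shows "Im (Mk nu dl z) = (Im z * I0 nu dl + Im d * I2 nut d * I1 nu dl) / (cmod z)\<^sup>2"
proof -
  have a: "Im (z * dl) = Im d * I2 nut d" using Im_zFk[OF assms(2,4,5)] assms(6) by simp
  show ?thesis using Im_Mk[OF assms(1,3,5)] unfolding a .
qed

lemma aux_alg: "(c::real) * ((D / Z * (s3 * s4)) / Z * (s1 * s2)) = D * (c * s1 * s3 * s2 * s4) / Z\<^sup>2"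
  by (simp add: field_simps power2_eq_square)

lemma contract:
  assumes "pr nu" "pr nut" "c \<ge> 0" "z \<noteq> 0"
    and "bnd nu dl1 A1" "bnd nut d1 B1" "dl1 = Fk nut d1 z"
    and "bnd nu dl2 A2" "bnd nut d2 B2" "dl2 = Fk nut d2 z"
  shows "cmod (complex_of_real c * Fk nu dl1 z - complex_of_real c * Fk nu dl2 z) \<le>
     cmod (d1 - d2) * (sqrt (c * I2 nu dl1 * I2 nut d1) * sqrt (c * I2 nu dl2 * I2 nut d2)) / (cmod z)\<^sup>2"
proof -
  have e1: "cmod (Fk nu dl1 z - Fk nu dl2 z) \<le> cmod (dl1 - dl2) / cmod z * (sqrt (I2 nu dl1) * sqrt (I2 nu dl2))"
    by (rule diff_Fk[OF assms(1,5,8,4)])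
  have e2: "cmod (dl1 - dl2) \<le> cmod (d1 - d2) / cmod z * (sqrt (I2 nut d1) * sqrt (I2 nut d2))"
    using diff_Fk[OF assms(2,6,9,4)] assms(7,10) by simp
  have "cmod (complex_of_real c * Fk nu dl1 z - complex_of_real c * Fk nu dl2 z) = c * cmod (Fk nu dl1 z - Fk nu dl2 z)"
    using assms(3) by (simp add: right_diff_distrib[symmetric] norm_mult)
  also have "\<dots> \<le> c * (cmod (dl1 - dl2) / cmod z * (sqrt (I2 nu dl1) * sqrt (I2 nu dl2)))"
    by (rule mult_left_mono[OF e1 assms(3)])
  also have "\<dots> \<le> c * ((cmod (d1 - d2) / cmod z * (sqrt (I2 nut d1) * sqrt (I2 nut d2))) / cmod z * (sqrt (I2 nu dl1) * sqrt (I2 nu dl2)))"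
    using e2 assms(3) by (intro mult_left_mono mult_right_mono divide_right_mono) (auto simp: I2_nonneg)
  also have "\<dots> = cmod (d1 - d2) * (c * sqrt (I2 nu dl1) * sqrt (I2 nut d1) * sqrt (I2 nu dl2) * sqrt (I2 nut d2)) / (cmod z)\<^sup>2"
    by (rule aux_alg)
  also have "c * sqrt (I2 nu dl1) * sqrt (I2 nut d1) * sqrt (I2 nu dl2) * sqrt (I2 nut d2) = sqrt (c * I2 nu dl1 * I2 nut d1) * sqrt (c * I2 nu dl2 * I2 nut d2)"
  proof -
    have "c = sqrt c * sqrt c" using assms(3) by simp
    then show ?thesis by (simp add: real_sqrt_mult mult_ac)
  qed
  finally show ?thesis .
qed

lemma sqrt_prod_lt:
  assumes "0 \<le> a" "0 \<le> b" "a < Z" "b < Z"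
  shows "sqrt a * sqrt b < Z"
proof -
  have "sqrt a * sqrt b = sqrt (a * b)" by (simp add: real_sqrt_mult)
  also have "a * b < Z\<^sup>2" using assms unfolding power2_eq_square by (intro mult_strict_mono) auto
  then have "sqrt (a * b) < sqrt (Z\<^sup>2)" by (rule real_sqrt_less_mono)
  also have "sqrt (Z\<^sup>2) = Z" using assms by simp
  finally show ?thesis .
qed

lemma sqrt_prod_le:
  assumes "0 \<le> a" "0 \<le> b" "a \<le> Z" "b \<le> Z"
  shows "sqrt a * sqrt b \<le> Z"
proof -
  have "sqrt a * sqrt b = sqrt (a * b)" by (simp add: real_sqrt_mult)
  also have "a * b \<le> Z\<^sup>2" using assms unfolding power2_eq_square by (intro mult_mono) auto
  then have "sqrt (a * b) \<le> sqrt (Z\<^sup>2)" by (rule real_sqrt_le_mono)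
  also have "sqrt (Z\<^sup>2) = Z" using assms by simp
  finally show ?thesis .
qed

lemma uniq:
  assumes "pr nu" "pr nut" "AE t in nu. 0 \<le> t" "AE t in nut. 0 \<le> t"
    and "nu \<noteq> return borel 0" "c > 0" "Im z > 0"
    and p: "Im (fst p) > 0" "Im (snd p) > 0" "fst p = complex_of_real c * Fk nu (snd p) z" "snd p = Fk nut (fst p) z"
    and q: "Im (fst q) > 0" "Im (snd q) > 0" "fst q = complex_of_real c * Fk nu (snd q) z" "snd q = Fk nut (fst q) z"
  shows "p = q"
proof -
  have z: "z \<noteq> 0" using assms(7) by auto
  obtain A1 where A1: "bnd nu (snd p) A1" using bnd_upper[OF assms(1,3) p(2)] by blast
  obtain B1 where B1: "bnd nut (fst p) B1" using bnd_upper[OF assms(2,4) p(1)] by blast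
  obtain A2 where A2: "bnd nu (snd q) A2" using bnd_upper[OF assms(1,3) q(2)] by blast
  obtain B2 where B2: "bnd nut (fst q) B2" using bnd_upper[OF assms(2,4) q(1)] by blast
  have lt: "c * I2 nu (snd p) * I2 nut (fst p) < (cmod z)\<^sup>2" if "bnd nu (snd p) A" "bnd nut (fst p) B"
    "Im (fst p) > 0" "fst p = complex_of_real c * Fk nu (snd p) z" "snd p = Fk nut (fst p) z" for p A B
  proof -
    have k: "Im (fst p) * ((cmod z)\<^sup>2 - (c * I2 nu (snd p)) * I2 nut (fst p)) = Im z * (c * I1 nu (snd p))"
      by (rule key1[OF assms(1,2) that(1,2) z that(4,5)])
    have "Im z * (c * I1 nu (snd p)) > 0" using I1_pos[OF assms(1) that(1) assms(5)] assms(6,7) by simp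
    then have "Im (fst p) * ((cmod z)\<^sup>2 - (c * I2 nu (snd p)) * I2 nut (fst p)) > 0" using k by simp
    then show ?thesis using that(3) by (simp add: zero_less_mult_iff)
  qed
  have l1: "c * I2 nu (snd p) * I2 nut (fst p) < (cmod z)\<^sup>2" by (rule lt[OF A1 B1 p(1,3,4)])
  have l2: "c * I2 nu (snd q) * I2 nut (fst q) < (cmod z)\<^sup>2" by (rule lt[OF A2 B2 q(1,3,4)])
  have s: "sqrt (c * I2 nu (snd p) * I2 nut (fst p)) * sqrt (c * I2 nu (snd q) * I2 nut (fst q)) < (cmod z)\<^sup>2"
    using l1 l2 assms(6) by (intro sqrt_prod_lt) (auto simp: I2_nonneg)
  have "cmod (fst p - fst q) \<le> cmod (fst p - fst q) * (sqrt (c * I2 nu (snd p) * I2 nut (fst p)) * sqrt (c * I2 nu (snd q) * I2 nut (fst q))) / (cmod z)\<^sup>2"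
    using contract[OF assms(1,2) _ z A1 B1 p(4) A2 B2 q(4)] assms(6) p(3) q(3) by simp
  then have "fst p = fst q"
  proof (rule contrapos_pp)
    assume ne: "fst p \<noteq> fst q"
    have "cmod (fst p - fst q) * (sqrt (c * I2 nu (snd p) * I2 nut (fst p)) * sqrt (c * I2 nu (snd q) * I2 nut (fst q))) / (cmod z)\<^sup>2
       < cmod (fst p - fst q) * (cmod z)\<^sup>2 / (cmod z)\<^sup>2"
      using s ne z by (intro divide_strict_right_mono mult_strict_left_mono) auto
    also have "\<dots> = cmod (fst p - fst q)" using z by simp
    finally show "\<not> cmod (fst p - fst q) \<le> cmod (fst p - fst q) * (sqrt (c * I2 nu (snd p) * I2 nut (fst p)) * sqrt (c * I2 nu (snd q) * I2 nut (fst q))) / (cmod z)\<^sup>2"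
      by simp
  qed
  moreover then have "snd p = snd q" using p(4) q(4) by metis
  ultimately show ?thesis by (simp add: prod_eq_iff)
qed

lemma delta_pair_eq:
  assumes "pr nu" "pr nut" "AE t in nu. 0 \<le> t" "AE t in nut. 0 \<le> t"
    and "nu \<noteq> return borel 0" "c > 0" "Im z > 0"
    and p: "Im (fst p) > 0" "Im (snd p) > 0" "fst p = complex_of_real c * Fk nu (snd p) z" "snd p = Fk nut (fst p) z"
  shows "delta_pair c nu nut z = p"
  unfolding delta_pair_def
proof (rule the_equality)
  show "Im (fst p) > 0 \<and> Im (snd p) > 0 \<and> fst p = complex_of_real c * (\<integral>t. complex_of_real t / (- z * (1 + snd p * complex_of_real t)) \<partial>nu)
      \<and> snd p = (\<integral>t. complex_of_real t / (- z * (1 + fst p * complex_of_real t)) \<partial>nut)"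
    using p(1,2) p(3,4)[unfolded Fk_def] by blast
  fix q assume "Im (fst q) > 0 \<and> Im (snd q) > 0 \<and> fst q = complex_of_real c * (\<integral>t. complex_of_real t / (- z * (1 + snd q * complex_of_real t)) \<partial>nu)
      \<and> snd q = (\<integral>t. complex_of_real t / (- z * (1 + fst q * complex_of_real t)) \<partial>nut)"
  then have q: "Im (fst q) > 0" "Im (snd q) > 0" "fst q = complex_of_real c * Fk nu (snd q) z" "snd q = Fk nut (fst q) z"
    unfolding Fk_def by blast+
  show "q = p" by (rule uniq[OF assms(1-7) q p])
qed



lemma at_z:
  assumes pnu: "pr nu" and pnut: "pr nut" and nr1: "nu \<noteq> return borel 0" and nr2: "nut \<noteq> return borel 0"
    and a0nu: "AE t in nu. 0 \<le> t" and a0nut: "AE t in nut. 0 \<le> t"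
    and c: "c > 0" and x: "x > 0"
    and b1: "bnd nu (of_real dt) M1" and b2: "bnd nut (of_real d0) M2"
    and e1: "Fk nut (of_real d0) (of_real x) = of_real dt"
    and e2: "complex_of_real c * Fk nu (of_real dt) (of_real x) = of_real d0"
    and q: "0 \<le> q" "q < 1" and r: "r > 0" and k: "k > 0"
    and H1: "r \<le> 1/(2*M2)"
    and H2: "(4*M2*M2/x + 2*M2*k/x\<^sup>2)*r \<le> 1/(2*M1)"
    and H3: "c*(I2 nu (of_real dt) + 6*M1^3*((4*M2*M2/x + 2*M2*k/x\<^sup>2)*r))*(I2 nut (of_real d0) + 6*M2^3*r) \<le> q*((x-k*r)*(x-k*r))"
    and H4: "k*r \<le> x/2"
    and H5: "c*((2*M2/x\<^sup>2)*(2/x)*(2*M1*M1) + 2*M1/x\<^sup>2) * (k*r) \<le> (1-q)*r"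
    and z: "Im z > 0" "cmod (z - of_real x) \<le> k*r"
  shows "Im (m_fun c nu nut z) \<le> ((2*M1)*(2*M1) + (c*((2*M1)*(2*M1))/((1-q)*(x\<^sup>2/4)))*((2*M2)*(2*M2))*((2*M1)*(2*M1)))/(x\<^sup>2/4) * Im z"
proof -
  define \<rho> where "\<rho> = k*r"
  define A1 where "A1 = 4*M2*M2/x + 2*M2*k/x\<^sup>2"
  have M1: "M1 > 0" using bnd_pos[OF b1] .
  have M2: "M2 > 0" using bnd_pos[OF b2] .
  have \<rho>0: "\<rho> \<ge> 0" using k r unfolding \<rho>_def by simp
  have "cmod (of_real x) - cmod z \<le> cmod (of_real x - z)" by (rule norm_triangle_ineq2)
  then have "x - cmod z \<le> cmod (z - of_real x)" by (simp add: norm_minus_commute)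
  then have zx': "x - \<rho> \<le> cmod z" using z(2) unfolding \<rho>_def by linarith
  have xr: "x/2 \<le> x - \<rho>" using H4 unfolding \<rho>_def by simp
  have zx: "x/2 \<le> cmod z" using zx' xr by linarith
  have z0: "z \<noteq> 0" using zx x by auto
  have zpos: "cmod z > 0" using z0 by simp
  have inv: "cmod (1/z - 1/of_real x) \<le> 2*\<rho>/x\<^sup>2"
  proof -
    have "1/z - 1/of_real x = (of_real x - z) / (z * of_real x)" using z0 x by (simp add: field_simps)
    then have "cmod (1/z - 1/of_real x) = cmod (z - of_real x) / (cmod z * x)"
      using x by (simp add: norm_divide norm_mult norm_minus_commute)
    also have "\<dots> \<le> \<rho> / ((x/2) * x)" using z(2) zx x zpos k r unfolding \<rho>_def
      by (intro frac_le mult_mono) auto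
    also have "\<dots> = 2*\<rho>/x\<^sup>2" by (simp add: power2_eq_square)
    finally show ?thesis .
  qed
  define S where "S = cball (of_real d0 :: complex) r"
  have bd: "bnd nut d (2*M2)" if "d \<in> S" for d
    using that H1 unfolding S_def by (intro bnd_pert[OF b2]) (auto simp: dist_norm norm_minus_commute)
  have Gb: "cmod (Fk nut d z - of_real dt) \<le> A1 * r" if "d \<in> S" for d
  proof -
    have dd: "cmod (d - of_real d0) \<le> r" using that unfolding S_def by (simp add: dist_norm norm_minus_commute)
    have "cmod (Fk nut d z - Fk nut (of_real d0) (of_real x)) \<le> cmod (d - of_real d0) / cmod z * (2*M2*M2) + cmod (1/z - 1/of_real x) * M2"
      using H1 dd by (intro cont_Fk[OF pnut b2 _ z0]) auto
    also have "\<dots> \<le> r / (x/2) * (2*M2*M2) + (2*\<rho>/x\<^sup>2) * M2"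
      using dd zx x M2 inv r by (intro add_mono mult_right_mono frac_le) auto
    also have "\<dots> = A1 * r" unfolding A1_def \<rho>_def by (simp add: field_simps power2_eq_square)
    finally show ?thesis unfolding e1 .
  qed
  have bG: "bnd nu (Fk nut d z) (2*M1)" if "d \<in> S" for d
    using Gb[OF that] H2 unfolding A1_def by (intro bnd_pert[OF b1]) auto
  have ab: "c * I2 nu (Fk nut d z) * I2 nut d \<le> q * (cmod z)\<^sup>2" if "d \<in> S" for d
  proof -
    have dd: "cmod (d - of_real d0) \<le> r" using that unfolding S_def by (simp add: dist_norm norm_minus_commute)
    have i1: "I2 nu (Fk nut d z) \<le> I2 nu (of_real dt) + 6*M1^3*(A1*r)"
    proof -
      have "\<bar>I2 nu (Fk nut d z) - I2 nu (of_real dt)\<bar> \<le> 6*M1^3*cmod (Fk nut d z - of_real dt)"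
        using Gb[OF that] H2 unfolding A1_def by (intro I2_diff[OF pnu b1]) auto
      also have "\<dots> \<le> 6*M1^3*(A1*r)" using Gb[OF that] M1 by (intro mult_left_mono) auto
      finally show ?thesis by linarith
    qed
    have i2: "I2 nut d \<le> I2 nut (of_real d0) + 6*M2^3*r"
    proof -
      have "\<bar>I2 nut d - I2 nut (of_real d0)\<bar> \<le> 6*M2^3*cmod (d - of_real d0)"
        using dd H1 by (intro I2_diff[OF pnut b2]) auto
      also have "\<dots> \<le> 6*M2^3*r" using dd M2 by (intro mult_left_mono) auto
      finally show ?thesis by linarith
    qed
    have "c * I2 nu (Fk nut d z) * I2 nut d \<le> c*(I2 nu (of_real dt) + 6*M1^3*(A1*r))*(I2 nut (of_real d0) + 6*M2^3*r)"
    proof -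
      have p1: "0 \<le> I2 nu (of_real dt) + 6*M1^3*(A1*r)" using I2_nonneg i1 by (rule order_trans)
      have "c * I2 nu (Fk nut d z) \<le> c * (I2 nu (of_real dt) + 6*M1^3*(A1*r))" using i1 c by simp
      moreover have "0 \<le> c * (I2 nu (of_real dt) + 6*M1^3*(A1*r))" using p1 c by simp
      ultimately show ?thesis using mult_mono[OF _ i2 _ I2_nonneg] by blast
    qed
    also have "\<dots> \<le> q*((x-\<rho>)*(x-\<rho>))" using H3 unfolding A1_def \<rho>_def .
    also have "\<dots> \<le> q * (cmod z)\<^sup>2" using zx' xr x q unfolding power2_eq_square
      by (intro mult_left_mono mult_mono) auto
    finally show ?thesis .
  qed
  define \<Phi> where "\<Phi> d = complex_of_real c * Fk nu (Fk nut d z) z" for d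
  have lip: "dist (\<Phi> d1) (\<Phi> d2) \<le> q * dist d1 d2" if "d1 \<in> S" "d2 \<in> S" for d1 d2
  proof -
    have "cmod (\<Phi> d1 - \<Phi> d2) \<le> cmod (d1 - d2) * (sqrt (c * I2 nu (Fk nut d1 z) * I2 nut d1) * sqrt (c * I2 nu (Fk nut d2 z) * I2 nut d2)) / (cmod z)\<^sup>2"
      unfolding \<Phi>_def using c by (intro contract[OF pnu pnut _ z0 bG[OF that(1)] bd[OF that(1)] refl bG[OF that(2)] bd[OF that(2)] refl]) auto
    also have "\<dots> \<le> cmod (d1 - d2) * (q * (cmod z)\<^sup>2) / (cmod z)\<^sup>2"
      using ab[OF that(1)] ab[OF that(2)] c
      by (intro divide_right_mono mult_left_mono sqrt_prod_le) (auto simp: I2_nonneg)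
    also have "\<dots> = q * cmod (d1 - d2)" using zpos by simp
    finally show ?thesis by (simp add: dist_norm)
  qed
  have self: "\<Phi> d \<in> S" if "d \<in> S" for d
  proof -
    have d0S: "of_real d0 \<in> S" unfolding S_def using r by simp
    have G0: "cmod (Fk nut (of_real d0) z - of_real dt) \<le> (2*\<rho>/x\<^sup>2) * M2"
    proof -
      have "cmod (Fk nut (of_real d0) z - Fk nut (of_real d0) (of_real x)) \<le> cmod (of_real d0 - of_real d0) / cmod z * (2*M2*M2) + cmod (1/z - 1/of_real x) * M2"
        using M2 by (intro cont_Fk[OF pnut b2 _ z0]) auto
      also have "\<dots> = cmod (1/z - 1/of_real x) * M2" by simp
      also have "\<dots> \<le> (2*\<rho>/x\<^sup>2) * M2" using inv M2 by (intro mult_right_mono) auto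
      finally show ?thesis unfolding e1 .
    qed
    have "cmod (\<Phi> (of_real d0) - of_real d0) = c * cmod (Fk nu (Fk nut (of_real d0) z) z - Fk nu (of_real dt) (of_real x))"
      unfolding \<Phi>_def e2[symmetric] using c by (simp add: right_diff_distrib[symmetric] norm_mult)
    also have "\<dots> \<le> c * (cmod (Fk nut (of_real d0) z - of_real dt) / cmod z * (2*M1*M1) + cmod (1/z - 1/of_real x) * M1)"
      using c bG[OF d0S] Gb[OF d0S] H2 unfolding A1_def
      by (intro mult_left_mono cont_Fk[OF pnu b1 _ z0]) (auto intro: order_trans)
    also have "\<dots> \<le> c * (((2*\<rho>/x\<^sup>2) * M2) / (x/2) * (2*M1*M1) + (2*\<rho>/x\<^sup>2) * M1)"
      using c G0 zx x inv M1 M2 \<rho>0 by (intro mult_left_mono add_mono mult_right_mono frac_le) auto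
    also have "\<dots> = c*((2*M2/x\<^sup>2)*(2/x)*(2*M1*M1) + 2*M1/x\<^sup>2) * (k*r)"
      unfolding \<rho>_def by (simp add: field_simps power2_eq_square)
    also have "\<dots> \<le> (1-q)*r" by (rule H5)
    finally have s2: "cmod (\<Phi> (of_real d0) - of_real d0) \<le> (1-q)*r" .
    have s1: "cmod (\<Phi> d - \<Phi> (of_real d0)) \<le> q * r"
      using lip[OF that d0S] that q unfolding S_def
      by (simp add: dist_norm) (metis dual_order.trans mult_left_mono norm_minus_commute)
    have "cmod (\<Phi> d - of_real d0) \<le> cmod (\<Phi> d - \<Phi> (of_real d0)) + cmod (\<Phi> (of_real d0) - of_real d0)"
      by (rule norm_diff_triangle_ineq[THEN order_trans[rotated]]) simp
    then have "cmod (\<Phi> d - of_real d0) \<le> r" using s1 s2 by (simp add: algebra_simps)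
    then show ?thesis unfolding S_def by (simp add: dist_norm norm_minus_commute)
  qed
  have "\<exists>!d\<in>S. \<Phi> d = d"
  proof (rule Banach_fix)
    show "Topological_Spaces.complete S" unfolding S_def by (simp add: complete_eq_closed)
    show "S \<noteq> {}" unfolding S_def using r by simp
    show "0 \<le> q" "q < 1" using q by auto
    show "\<Phi> ` S \<subseteq> S" using self by blast
    show "\<And>x y. x \<in> S \<Longrightarrow> y \<in> S \<Longrightarrow> dist (\<Phi> x) (\<Phi> y) \<le> q * dist x y" by (rule lip)
  qed
  then obtain d where dS: "d \<in> S" and dfix: "\<Phi> d = d" by blast
  define dl where "dl = Fk nut d z"
  have eqd: "d = complex_of_real c * Fk nu dl z" using dfix unfolding \<Phi>_def dl_def by simp
  have bdl: "bnd nu dl (2*M1)" unfolding dl_def by (rule bG[OF dS])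
  have bdd: "bnd nut d (2*M2)" by (rule bd[OF dS])
  have abd: "c * I2 nu dl * I2 nut d \<le> q * (cmod z)\<^sup>2" unfolding dl_def by (rule ab[OF dS])
  define D where "D = (cmod z)\<^sup>2 - (c * I2 nu dl) * I2 nut d"
  have Dge: "D \<ge> (1-q)*(x\<^sup>2/4)"
  proof -
    have "(x/2)\<^sup>2 \<le> (cmod z)\<^sup>2" using zx x by (intro power_mono) auto
    then have "(1-q)*(x\<^sup>2/4) \<le> (1-q)*(cmod z)\<^sup>2" using q by (intro mult_left_mono) (auto simp: power_divide)
    then show ?thesis unfolding D_def using abd by (simp add: algebra_simps)
  qed
  have Dpos: "D > 0" using Dge q x by (smt (verit) mult_pos_pos zero_less_power divide_pos_pos)
  have k1: "Im d * D = Im z * (c * I1 nu dl)" unfolding D_def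
    by (rule key1[OF pnu pnut bdl bdd z0 eqd dl_def])
  have k2: "Im dl * D = Im z * I1 nut d" unfolding D_def
    by (rule key2[OF pnu pnut bdl bdd z0 eqd dl_def])
  have I1a: "I1 nu dl > 0" by (rule I1_pos[OF pnu bdl nr1])
  have I1b: "I1 nut d > 0" by (rule I1_pos[OF pnut bdd nr2])
  have Imd: "Im d > 0" using k1 Dpos I1a c z(1) by (smt (verit) mult_pos_pos zero_less_mult_iff)
  have Imdl: "Im dl > 0" using k2 Dpos I1b z(1) by (smt (verit) mult_pos_pos zero_less_mult_iff)
  have dp: "delta_pair c nu nut z = (d, dl)"
    by (rule delta_pair_eq[OF pnu pnut a0nu a0nut nr1 c z(1)]) (simp_all only: fst_conv snd_conv Imd Imdl eqd[symmetric] dl_def[symmetric])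
  have m: "m_fun c nu nut z = Mk nu dl z" unfolding m_fun_def dp Mk_def by simp
  have Imm: "Im (m_fun c nu nut z) = (Im z * I0 nu dl + Im d * I2 nut d * I1 nu dl) / (cmod z)\<^sup>2"
    unfolding m by (rule keym[OF pnu pnut bdl bdd z0 dl_def])
  have bI0: "I0 nu dl \<le> (2*M1)*(2*M1)" by (rule I0_bound[OF pnu bdl])
  have bI1: "I1 nu dl \<le> (2*M1)*(2*M1)" by (rule I1_bound[OF pnu bdl])
  have bI2: "I2 nut d \<le> (2*M2)*(2*M2)" by (rule I2_bound[OF pnut bdd])
  define Q where "Q = c*((2*M1)*(2*M1))/((1-q)*(x\<^sup>2/4))"
  have ImdQ: "Im d \<le> Im z * Q"
  proof -
    have "Im d = Im z * (c * I1 nu dl) / D" using k1 Dpos by (simp add: field_simps)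
    also have "\<dots> \<le> Im z * (c * ((2*M1)*(2*M1))) / ((1-q)*(x\<^sup>2/4))"
      using z(1) c bI1 I1a Dge q x by (intro frac_le mult_left_mono) auto
    also have "\<dots> = Im z * Q" unfolding Q_def by simp
    finally show ?thesis .
  qed
  have "Im z * I0 nu dl + Im d * I2 nut d * I1 nu dl \<le> Im z * ((2*M1)*(2*M1)) + (Im z * Q) * ((2*M2)*(2*M2)) * ((2*M1)*(2*M1))"
    using z(1) bI0 bI1 bI2 ImdQ Imd I1a
    by (intro add_mono mult_left_mono mult_mono) (auto simp: I2_nonneg)
  also have "\<dots> = ((2*M1)*(2*M1) + Q*((2*M2)*(2*M2))*((2*M1)*(2*M1))) * Im z" by (simp add: algebra_simps)
  finally have num: "Im z * I0 nu dl + Im d * I2 nut d * I1 nu dl \<le> ((2*M1)*(2*M1) + Q*((2*M2)*(2*M2))*((2*M1)*(2*M1))) * Im z" .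
  have numpos: "0 \<le> Im z * I0 nu dl + Im d * I2 nut d * I1 nu dl"
    using z(1) Imd I1a by (auto intro!: add_nonneg_nonneg mult_nonneg_nonneg I0_nonneg I2_nonneg)
  have "Im (m_fun c nu nut z) \<le> (((2*M1)*(2*M1) + Q*((2*M2)*(2*M2))*((2*M1)*(2*M1))) * Im z) / (x\<^sup>2/4)"
    unfolding Imm
  proof (rule frac_le[OF _ num])
    show "0 \<le> ((2*M1)*(2*M1) + Q*((2*M2)*(2*M2))*((2*M1)*(2*M1))) * Im z" using num numpos by linarith
    show "0 < x\<^sup>2/4" using x by simp
    show "x\<^sup>2/4 \<le> (cmod z)\<^sup>2" using zx x power_mono[of "x/2" "cmod z" 2] by (simp add: power_divide)
  qed
  then show ?thesis unfolding Q_def by (simp only: times_divide_eq_left)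
qed



lemma ev_obtain:
  assumes "eventually P (at_right (0::real))"
  obtains r where "r > 0" "P r"
proof -
  have "eventually (\<lambda>r. 0 < r \<and> P r) (at_right (0::real))"
    using assms eventually_at_right_less[of 0] by eventually_elim auto
  then have "\<exists>r. 0 < r \<and> P r" using eventually_happens trivial_limit_at_right_real by blast
  then show ?thesis using that by blast
qed

lemma aux_half: "(a::real) < 1 \<Longrightarrow> a < (1 + a)/2" by simp

lemma local_bound:
  assumes pnu: "pr nu" and pnut: "pr nut" and nr1: "nu \<noteq> return borel 0" and nr2: "nut \<noteq> return borel 0"
    and a0nu: "AE t in nu. 0 \<le> t" and a0nut: "AE t in nut. 0 \<le> t"
    and c: "c > 0" and x: "x > 0"
    and b1: "bnd nu (of_real dt) M1" and b2: "bnd nut (of_real d0) M2"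
    and e1: "Fk nut (of_real d0) (of_real x) = of_real dt"
    and e2: "complex_of_real c * Fk nu (of_real dt) (of_real x) = of_real d0"
    and jac: "c * I2 nu (of_real dt) * I2 nut (of_real d0) < x\<^sup>2"
  shows "\<exists>\<rho>>0. \<exists>K. \<forall>z. Im z > 0 \<longrightarrow> cmod (z - of_real x) \<le> \<rho> \<longrightarrow> Im (m_fun c nu nut z) \<le> K * Im z"
proof -
  define P1 where "P1 = I2 nu (of_real dt)"
  define P2 where "P2 = I2 nut (of_real d0)"
  have M1: "M1 > 0" using bnd_pos[OF b1] .
  have M2: "M2 > 0" using bnd_pos[OF b2] .
  have P0: "0 \<le> c * P1 * P2" unfolding P1_def P2_def using c by (simp add: I2_nonneg)
  define q where "q = (1 + c*P1*P2/x\<^sup>2)/2"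
  have x2: "x\<^sup>2 > 0" using x by simp
  have lt1: "c*P1*P2/x\<^sup>2 < 1" using jac x2 unfolding P1_def P2_def by simp
  have q0: "0 \<le> q" unfolding q_def using P0 x2 by simp
  have q1: "q < 1" unfolding q_def using lt1 by simp
  have jq: "c*P1*P2 - q*(x*x) < 0"
  proof -
    have "c*P1*P2/x\<^sup>2 < q" unfolding q_def using aux_half[OF lt1] .
    then have "c*P1*P2 < q * x\<^sup>2" using x2 by (simp add: divide_less_eq)
    then show ?thesis by (simp add: power2_eq_square)
  qed
  define L where "L = c*((2*M2/x\<^sup>2)*(2/x)*(2*M1*M1) + 2*M1/x\<^sup>2)"
  have L0: "L \<ge> 0" unfolding L_def using c M1 M2 x by simp
  define k where "k = (1-q)/(L+1)"
  have k0: "k > 0" unfolding k_def using q1 L0 by simp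
  have Lk: "L * k \<le> 1 - q"
  proof -
    have "L * k = (1-q) * (L/(L+1))" unfolding k_def by simp
    also have "\<dots> \<le> (1-q) * 1" using q1 L0 by (intro mult_left_mono) auto
    finally show ?thesis by simp
  qed
  define A1 where "A1 = 4*M2*M2/x + 2*M2*k/x\<^sup>2"
  have ev1: "eventually (\<lambda>r. r < 1/(2*M2)) (at_right 0)"
    by (rule order_tendstoD(2)[OF tendsto_ident_at]) (use M2 in simp)
  have ev2: "eventually (\<lambda>r. A1*r < 1/(2*M1)) (at_right 0)"
  proof (rule order_tendstoD(2))
    show "((\<lambda>r. A1*r) \<longlongrightarrow> A1*0) (at_right 0)" by (intro tendsto_intros)
  qed (use M1 in simp)
  have ev3: "eventually (\<lambda>r. c*(P1 + 6*M1^3*(A1*r))*(P2 + 6*M2^3*r) - q*((x-k*r)*(x-k*r)) < 0) (at_right 0)"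
  proof (rule order_tendstoD(2))
    show "((\<lambda>r. c*(P1 + 6*M1^3*(A1*r))*(P2 + 6*M2^3*r) - q*((x-k*r)*(x-k*r))) \<longlongrightarrow>
      c*(P1 + 6*M1^3*(A1*0))*(P2 + 6*M2^3*0) - q*((x-k*0)*(x-k*0))) (at_right 0)" by (intro tendsto_intros)
  qed (use jq in simp)
  have ev4: "eventually (\<lambda>r. k*r < x/2) (at_right 0)"
  proof (rule order_tendstoD(2))
    show "((\<lambda>r. k*r) \<longlongrightarrow> k*0) (at_right 0)" by (intro tendsto_intros)
  qed (use x in simp)
  have "eventually (\<lambda>r. r < 1/(2*M2) \<and> A1*r < 1/(2*M1) \<and>
      c*(P1 + 6*M1^3*(A1*r))*(P2 + 6*M2^3*r) - q*((x-k*r)*(x-k*r)) < 0 \<and> k*r < x/2) (at_right 0)"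
    using ev1 ev2 ev3 ev4 by eventually_elim auto
  then obtain r where r: "r > 0" and hr: "r < 1/(2*M2)" "A1*r < 1/(2*M1)"
      "c*(P1 + 6*M1^3*(A1*r))*(P2 + 6*M2^3*r) - q*((x-k*r)*(x-k*r)) < 0" "k*r < x/2"
    by (rule ev_obtain) blast
  have H5: "c*((2*M2/x\<^sup>2)*(2/x)*(2*M1*M1) + 2*M1/x\<^sup>2) * (k*r) \<le> (1-q)*r"
  proof -
    have "c*((2*M2/x\<^sup>2)*(2/x)*(2*M1*M1) + 2*M1/x\<^sup>2) * (k*r) = (L*k)*r" unfolding L_def by simp
    also have "\<dots> \<le> (1-q)*r" using Lk r by (intro mult_right_mono) auto
    finally show ?thesis .
  qed
  define K where "K = ((2*M1)*(2*M1) + (c*((2*M1)*(2*M1))/((1-q)*(x\<^sup>2/4)))*((2*M2)*(2*M2))*((2*M1)*(2*M1)))/(x\<^sup>2/4)"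
  have "\<forall>z. Im z > 0 \<longrightarrow> cmod (z - of_real x) \<le> k*r \<longrightarrow> Im (m_fun c nu nut z) \<le> K * Im z"
  proof (intro allI impI)
    fix z assume z: "Im z > 0" "cmod (z - of_real x) \<le> k*r"
    show "Im (m_fun c nu nut z) \<le> K * Im z" unfolding K_def
    proof (rule at_z[OF pnu pnut nr1 nr2 a0nu a0nut c x b1 b2 e1 e2 q0 q1 r k0 _ _ _ _ H5 z])
      show "r \<le> 1/(2*M2)" using hr by simp
      show "(4*M2*M2/x + 2*M2*k/x\<^sup>2)*r \<le> 1/(2*M1)" using hr unfolding A1_def by simp
      show "c*(I2 nu (of_real dt) + 6*M1^3*((4*M2*M2/x + 2*M2*k/x\<^sup>2)*r))*(I2 nut (of_real d0) + 6*M2^3*r) \<le> q*((x-k*r)*(x-k*r))"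
        using hr unfolding A1_def P1_def P2_def by simp
      show "k*r \<le> x/2" using hr by simp
    qed
  qed
  moreover have "k*r > 0" using k0 r by simp
  ultimately show ?thesis by blast
qed



lemma ptw_stiel:
  assumes "h > 0"
  shows "Im (1 / (complex_of_real t - Complex E h)) = h / ((t - E)\<^sup>2 + h\<^sup>2)"
  using assms by (simp add: Im_divide power2_eq_square)

lemma ball_bound:
  assumes pmu: "pr mu"
    and hyp: "\<forall>z. Im z > 0 \<longrightarrow> (\<integral>t. 1 / (complex_of_real t - z) \<partial>mu) = m_fun c nu nut z"
    and bound: "\<forall>z. Im z > 0 \<longrightarrow> cmod (z - of_real x) \<le> \<rho> \<longrightarrow> Im (m_fun c nu nut z) \<le> K * Im z"
    and Eh: "\<bar>E - x\<bar> + h \<le> \<rho>" "h > 0"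
  shows "measure mu (ball E h) \<le> 2*K*h\<^sup>2"
proof -
  define z where "z = Complex E h"
  have Imz: "Im z = h" unfolding z_def by simp
  have "z - of_real x = Complex (E - x) h" unfolding z_def by (simp add: complex_eq_iff)
  then have "cmod (z - of_real x) \<le> \<bar>E - x\<bar> + \<bar>h\<bar>" using cmod_le[of "z - of_real x"] by simp
  then have zx: "cmod (z - of_real x) \<le> \<rho>" using Eh by simp
  have bm: "Im (m_fun c nu nut z) \<le> K * h" using bound zx Imz Eh(2) by auto
  have int: "integrable mu (\<lambda>t. 1 / (complex_of_real t - z))"
  proof (rule pr_int[OF pmu, where C="1/h"])
    show "(\<lambda>t. 1 / (complex_of_real t - z)) \<in> borel_measurable borel" by measurable
    show "AE t in mu. norm (1 / (complex_of_real t - z)) \<le> 1/h"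
    proof (rule AE_I2)
      fix t :: real
      have "h = \<bar>Im (complex_of_real t - z)\<bar>" using Imz Eh(2) by simp
      also have "\<dots> \<le> cmod (complex_of_real t - z)" by (rule abs_Im_le_cmod)
      finally have "h \<le> cmod (complex_of_real t - z)" .
      then show "norm (1 / (complex_of_real t - z)) \<le> 1/h" using Eh(2)
        by (simp add: norm_divide divide_simps)
    qed
  qed
  have "Im (m_fun c nu nut z) = Im (\<integral>t. 1 / (complex_of_real t - z) \<partial>mu)" using hyp Imz Eh(2) by simp
  also have "\<dots> = (\<integral>t. Im (1 / (complex_of_real t - z)) \<partial>mu)" using int by simp
  also have "\<dots> = (\<integral>t. h / ((t - E)\<^sup>2 + h\<^sup>2) \<partial>mu)" unfolding z_def using ptw_stiel[OF Eh(2)] by simp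
  finally have I: "(\<integral>t. h / ((t - E)\<^sup>2 + h\<^sup>2) \<partial>mu) \<le> K * h" using bm by simp
  have intg: "integrable mu (\<lambda>t. h / ((t - E)\<^sup>2 + h\<^sup>2))"
  proof (rule pr_int[OF pmu, where C="1/h"])
    show "(\<lambda>t. h / ((t - E)\<^sup>2 + h\<^sup>2)) \<in> borel_measurable borel" by measurable
    show "AE t in mu. norm (h / ((t - E)\<^sup>2 + h\<^sup>2)) \<le> 1/h"
    proof (rule AE_I2)
      fix t :: real
      have p: "h\<^sup>2 \<le> (t - E)\<^sup>2 + h\<^sup>2" by simp
      have "h / ((t - E)\<^sup>2 + h\<^sup>2) \<le> h / h\<^sup>2" using Eh(2) p
      proof (intro divide_left_mono)
        have "0 < h\<^sup>2" using Eh(2) by simp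
        moreover have "0 < (t - E)\<^sup>2 + h\<^sup>2" using Eh(2) by (simp add: add_nonneg_pos)
        ultimately show "0 < ((t - E)\<^sup>2 + h\<^sup>2) * h\<^sup>2" by simp
      qed auto
      also have "\<dots> = 1/h" by (simp add: power2_eq_square)
      finally show "norm (h / ((t - E)\<^sup>2 + h\<^sup>2)) \<le> 1/h" using Eh(2) by simp
    qed
  qed
  interpret prob_space mu using pmu unfolding pr_def by simp
  have sb: "ball E h \<in> sets mu" using pmu unfolding pr_def by simp
  have "measure mu (ball E h) = (\<integral>t. indicator (ball E h) t \<partial>mu)"
    using pr_space[OF pmu] by simp
  also have "\<dots> \<le> (\<integral>t. (2*h) * (h / ((t - E)\<^sup>2 + h\<^sup>2)) \<partial>mu)"
  proof (rule integral_mono)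
    show "integrable mu (indicator (ball E h) :: real \<Rightarrow> real)"
      by (rule integrable_real_indicator[OF sb]) (simp add: emeasure_eq_measure)
    show "integrable mu (\<lambda>t. (2*h) * (h / ((t - E)\<^sup>2 + h\<^sup>2)))" by (rule integrable_mult_right[OF intg])
    fix t :: real
    show "indicator (ball E h) t \<le> (2*h) * (h / ((t - E)\<^sup>2 + h\<^sup>2))"
    proof (cases "t \<in> ball E h")
      case True
      then have "\<bar>t - E\<bar> < h" by (simp add: dist_real_def abs_minus_commute)
      then have "\<bar>t - E\<bar>\<^sup>2 < h\<^sup>2" by (intro power_strict_mono) auto
      then have "(t - E)\<^sup>2 < h\<^sup>2" by simp
      then have "(t - E)\<^sup>2 + h\<^sup>2 \<le> 2*h*h" by (simp add: power2_eq_square)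
      moreover have "0 < (t - E)\<^sup>2 + h\<^sup>2" using Eh(2) by (simp add: add_nonneg_pos)
      ultimately have "1 \<le> (2*h) * (h / ((t - E)\<^sup>2 + h\<^sup>2))"
        by (simp add: divide_simps)
      then show ?thesis using True by simp
    next
      case False
      then show ?thesis using Eh(2) by simp
    qed
  qed
  also have "\<dots> = (2*h) * (\<integral>t. h / ((t - E)\<^sup>2 + h\<^sup>2) \<partial>mu)" by (rule integral_mult_right_zero)
  also have "\<dots> \<le> (2*h) * (K * h)" using I Eh(2) by (intro mult_left_mono) auto
  also have "\<dots> = 2*K*h\<^sup>2" by (simp add: power2_eq_square)
  finally show ?thesis .
qed



lemma cover:
  assumes r: "r > 0" and N: "N \<ge> (1::nat)"
  shows "ball x r \<subseteq> (\<Union>k\<in>{..<N}. ball (x - r + (2 * real k + 1) * r / real N) (2 * r / real N))"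
proof
  fix y assume "y \<in> ball x r"
  then have yx: "\<bar>y - x\<bar> < r" by (simp add: dist_real_def abs_minus_commute)
  have Np: "real N > 0" using N by simp
  define u where "u = (y - x + r) * real N / (2 * r)"
  have u0: "0 \<le> u" unfolding u_def using yx r Np by (simp add: abs_less_iff)
  have uN: "u < real N"
  proof -
    have "y - x + r < 2 * r" using yx by (simp add: abs_less_iff)
    then have "(y - x + r) * real N < (2 * r) * real N" using Np by (intro mult_strict_right_mono) auto
    then show ?thesis unfolding u_def using r by (simp add: divide_less_eq mult.commute)
  qed
  define k where "k = nat \<lfloor>u\<rfloor>"
  have kf: "real k = of_int \<lfloor>u\<rfloor>" unfolding k_def using u0 by simp
  have k1: "real k \<le> u" "u < real k + 1" unfolding kf by linarith+
  have kN: "k < N" using k1 uN by linarith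
  have eq: "y - (x - r + (2 * real k + 1) * r / real N) = (2*u - 2*real k - 1) * r / real N"
    unfolding u_def using r Np by (simp add: field_simps)
  have "\<bar>2*u - 2*real k - 1\<bar> \<le> 1" using k1 by linarith
  then have "\<bar>2*u - 2*real k - 1\<bar> * r / real N \<le> 1 * r / real N" using r Np
    by (intro divide_right_mono mult_right_mono) auto
  also have "\<dots> < 2 * r / real N" using r Np by (simp add: divide_strict_right_mono)
  finally have "\<bar>y - (x - r + (2 * real k + 1) * r / real N)\<bar> < 2 * r / real N"
    unfolding eq using r Np by (simp add: abs_mult abs_div)
  then have "y \<in> ball (x - r + (2 * real k + 1) * r / real N) (2 * r / real N)"
    by (simp add: dist_real_def abs_minus_commute)
  then show "y \<in> (\<Union>k\<in>{..<N}. ball (x - r + (2 * real k + 1) * r / real N) (2 * r / real N))"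
    using kN by blast
qed

lemma cover_measure:
  assumes pmu: "pr mu" and rho: "\<rho> > 0"
    and bb: "\<And>E h. \<bar>E - x\<bar> + h \<le> \<rho> \<Longrightarrow> h > 0 \<Longrightarrow> measure mu (ball E h) \<le> 2*K*h\<^sup>2"
  shows "emeasure mu (ball x (\<rho>/4)) = 0"
proof -
  interpret prob_space mu using pmu unfolding pr_def by simp
  define r where "r = \<rho>/4"
  have r: "r > 0" unfolding r_def using rho by simp
  have sets: "\<And>A. A \<in> sets borel \<Longrightarrow> A \<in> sets mu" using pmu unfolding pr_def by simp
  have cov: "measure mu (ball x r) \<le> 8*K*r\<^sup>2 / real N" if N: "N \<ge> 1" for N :: nat
  proof -
    have Np: "real N > 0" using N by simp
    define E where "E k = x - r + (2 * real k + 1) * r / real N" for k :: nat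
    define h where "h = 2 * r / real N"
    have h0: "h > 0" unfolding h_def using r Np by simp
    have "measure mu (ball x r) \<le> measure mu (\<Union>k\<in>{..<N}. ball (E k) h)"
      using cover[OF r N, of x] unfolding E_def h_def by (intro finite_measure_mono sets) auto
    also have "\<dots> \<le> (\<Sum>k\<in>{..<N}. measure mu (ball (E k) h))"
      by (rule finite_measure_subadditive_finite) (auto intro: sets)
    also have "\<dots> \<le> (\<Sum>k\<in>{..<N}. 2*K*h\<^sup>2)"
    proof (rule sum_mono)
      fix k assume "k \<in> {..<N}"
      then have kN: "real k + 1 \<le> real N" by simp
      have a: "0 \<le> (2 * real k + 1) * r / real N" using r Np by simp
      have "(2 * real k + 1) * r / real N \<le> 2 * r"
      proof -
        have "(2 * real k + 1) * r \<le> (2 * real N) * r" using kN r by (intro mult_right_mono) auto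
        then show ?thesis using Np by (simp add: divide_le_eq mult_ac)
      qed
      then have "\<bar>E k - x\<bar> \<le> r" unfolding E_def using a by (simp add: abs_le_iff)
      moreover have "h \<le> 2 * r" unfolding h_def using r N
        by (simp add: divide_le_eq)
      ultimately have "\<bar>E k - x\<bar> + h \<le> \<rho>" unfolding r_def using rho by simp
      then show "measure mu (ball (E k) h) \<le> 2*K*h\<^sup>2" using bb h0 by blast
    qed
    also have "\<dots> = real N * (2*K*h\<^sup>2)" by simp
    also have "\<dots> = 8*K*r\<^sup>2 / real N" unfolding h_def using Np by (simp add: field_simps power2_eq_square)
    finally show ?thesis .
  qed
  have m0: "measure mu (ball x r) = 0"
  proof (rule ccontr)
    assume "measure mu (ball x r) \<noteq> 0"
    then have mp: "measure mu (ball x r) > 0" using measure_nonneg[of mu "ball x r"] by linarith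
    define N where "N = nat \<lceil>8*\<bar>K\<bar>*r\<^sup>2 / measure mu (ball x r)\<rceil> + 1"
    have N1: "N \<ge> 1" unfolding N_def by simp
    have "8*\<bar>K\<bar>*r\<^sup>2 / measure mu (ball x r) < real N" unfolding N_def by linarith
    then have lt: "8*\<bar>K\<bar>*r\<^sup>2 < real N * measure mu (ball x r)" using mp by (simp add: divide_less_eq)
    have "measure mu (ball x r) \<le> 8*K*r\<^sup>2 / real N" by (rule cov[OF N1])
    also have "\<dots> \<le> 8*\<bar>K\<bar>*r\<^sup>2 / real N" using N1 by (intro divide_right_mono) (auto intro: mult_right_mono)
    finally have "measure mu (ball x r) * real N \<le> 8*\<bar>K\<bar>*r\<^sup>2" using N1 by (simp add: le_divide_eq)
    then show False using lt by (simp add: mult.commute)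
  qed
  then show ?thesis unfolding r_def[symmetric] by (simp add: emeasure_eq_measure)
qed



lemma Fk_real: "Fk N (of_real d) (of_real x) = of_real (\<integral>t. t / (- x * (1 + d * t)) \<partial>N)"
proof -
  have "of_real (\<integral>t. t / (- x * (1 + d * t)) \<partial>N) = (\<integral>t. complex_of_real (t / (- x * (1 + d * t))) \<partial>N)"
    by (rule integral_complex_of_real[symmetric])
  also have "\<dots> = Fk N (of_real d) (of_real x)" unfolding Fk_def
    by (rule Bochner_Integration.integral_cong) simp_all
  finally show ?thesis by simp
qed

lemma I2_real: "(\<integral>t. t\<^sup>2 / (x\<^sup>2 * (1 + d * t)\<^sup>2) \<partial>N) = I2 N (of_real d) / x\<^sup>2"
proof -
  have "I2 N (of_real d) / x\<^sup>2 = (\<integral>t. t\<^sup>2 / (cmod (1 + of_real d * of_real t))\<^sup>2 / x\<^sup>2 \<partial>N)"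
    unfolding I2_def by (rule integral_divide_zero[symmetric])
  also have "\<dots> = (\<integral>t. t\<^sup>2 / (x\<^sup>2 * (1 + d * t)\<^sup>2) \<partial>N)"
  proof (rule Bochner_Integration.integral_cong)
    fix t
    have "cmod (1 + complex_of_real d * complex_of_real t) = \<bar>1 + d * t\<bar>"
      by (metis norm_of_real of_real_1 of_real_add of_real_mult)
    then show "t\<^sup>2 / (cmod (1 + complex_of_real d * complex_of_real t))\<^sup>2 / x\<^sup>2 = t\<^sup>2 / (x\<^sup>2 * (1 + d * t)\<^sup>2)"
      by (simp add: divide_divide_eq_left mult.commute)
  qed simp
  finally show ?thesis by simp
qed

theorem proposition3p7:
  fixes c x dt :: real and nu nut mu :: "real measure"
  assumes "c > 0"
    and "prob_on_Rplus nu" and "nu \<noteq> return borel 0"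
    and "prob_on_Rplus nut" and "nut \<noteq> return borel 0"
    and "prob_on_Rplus mu"
    and "\<forall>z. Im z > 0 \<longrightarrow> (\<integral>t. 1 / (complex_of_real t - z) \<partial>mu) = m_fun c nu nut z"
    and "dt \<in> Dset nu"
    and "x \<noteq> 0"
    and "(c * (\<integral>t. t / (- x * (1 + dt * t)) \<partial>nu)) \<in> Dset nut"
    and "dt = (\<integral>t. t / (- x * (1 + (c * (\<integral>s. s / (- x * (1 + dt * s)) \<partial>nu)) * t)) \<partial>nut)"
    and "1 - x\<^sup>2 * (c * (\<integral>t. t\<^sup>2 / (x\<^sup>2 * (1 + dt * t)\<^sup>2) \<partial>nu))
             * (\<integral>t. t\<^sup>2 / (x\<^sup>2 * (1 + (c * (\<integral>s. s / (- x * (1 + dt * s)) \<partial>nu)) * t)\<^sup>2) \<partial>nut) > 0"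
  shows "x \<notin> msupp mu"
proof (cases "x < 0")
  case True
  have sub: "ball x (-x) \<subseteq> {..<0}" by (auto simp: dist_real_def abs_less_iff)
  have "emeasure mu (ball x (-x)) \<le> emeasure mu {..<0}"
    by (rule emeasure_mono[OF sub]) (use assms(6) in \<open>simp add: prob_on_Rplus_def\<close>)
  then have "emeasure mu (ball x (-x)) = 0" using assms(6) unfolding prob_on_Rplus_def by simp
  moreover have "-x > 0" using True by simp
  ultimately show ?thesis unfolding msupp_def by blast
next
  case False
  then have x: "x > 0" using assms(9) by simp
  have pnu: "pr nu" and pnut: "pr nut" and pmu: "pr mu" using assms(2,4,6) by (simp_all add: rplus_pr)
  have a0nu: "AE t in nu. 0 \<le> t" and a0nut: "AE t in nut. 0 \<le> t" using assms(2,4) by (simp_all add: rplus_AE)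
  define d0 where "d0 = c * (\<integral>t. t / (- x * (1 + dt * t)) \<partial>nu)"
  obtain M1 where b1: "bnd nu (of_real dt) M1" using bnd_D[OF assms(2,8)] by blast
  obtain M2 where b2: "bnd nut (of_real d0) M2" using bnd_D[OF assms(4) assms(10)[folded d0_def]] by blast
  have e1: "Fk nut (of_real d0) (of_real x) = of_real dt"
    unfolding Fk_real using assms(11)[folded d0_def] by simp
  have e2: "complex_of_real c * Fk nu (of_real dt) (of_real x) = of_real d0"
    unfolding Fk_real d0_def by simp
  have jac: "c * I2 nu (of_real dt) * I2 nut (of_real d0) < x\<^sup>2"
  proof -
    have x2: "x\<^sup>2 > 0" using x by simp
    have "0 < 1 - x\<^sup>2 * (c * (I2 nu (of_real dt) / x\<^sup>2)) * (I2 nut (of_real d0) / x\<^sup>2)"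
      using assms(12)[folded d0_def] unfolding I2_real .
    also have "x\<^sup>2 * (c * (I2 nu (of_real dt) / x\<^sup>2)) * (I2 nut (of_real d0) / x\<^sup>2) = c * I2 nu (of_real dt) * I2 nut (of_real d0) / x\<^sup>2"
      using x2 by (simp add: field_simps power2_eq_square)
    finally have "c * I2 nu (of_real dt) * I2 nut (of_real d0) / x\<^sup>2 < 1" by simp
    then show ?thesis using x2 by (simp add: divide_less_eq)
  qed
  obtain \<rho> K where rho: "\<rho> > 0" and bound: "\<forall>z. Im z > 0 \<longrightarrow> cmod (z - of_real x) \<le> \<rho> \<longrightarrow> Im (m_fun c nu nut z) \<le> K * Im z"
    using local_bound[OF pnu pnut assms(3,5) a0nu a0nut assms(1) x b1 b2 e1 e2 jac] by blast
  have "emeasure mu (ball x (\<rho>/4)) = 0"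
  proof (rule cover_measure[OF pmu rho])
    fix E h assume "\<bar>E - x\<bar> + h \<le> \<rho>" "h > 0"
    then show "measure mu (ball E h) \<le> 2*K*h\<^sup>2" by (rule ball_bound[OF pmu assms(7) bound])
  qed
  moreover have "\<rho>/4 > 0" using rho by simp
  ultimately show ?thesis unfolding msupp_def by blast
qed

end
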